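(* Let $\otimes$ be a functorial tensor product of finite-dimensional abstract operator systems. Then there exist an index set $I$ and, for $i\in I$, abstract operator systems $\mathcal D_i$ on $V_i$ and $\mathcal E_i$ on $W_i$, integers $n_i\in\mathbb N$ and elements $x_i\in\pm\big(\mathcal D_i(1)\otimes_{\max}\mathcal E_i(1)\otimes_{\max}{\rm Psd}_{n_i}(\mathbb C)\big)$, such that for all abstract operator systems $\mathcal G$ on $X$, $\mathcal H$ on $Y$, all $n\in\mathbb N$ and all $a\in X\otimes Y\otimes{\rm Her}_n(\mathbb C)$: $$a\in(\mathcal G\otimes\mathcal H)(n)\iff\forall i\in I:\ x_i\otimes a\in(\mathcal D_i\otimes_{\min}\mathcal G)(1)\otimes_{\max}(\mathcal E_i\otimes_{\min}\mathcal H)(1)\otimes_{\max}{\rm Psd}_{n_in}(\mathbb C).$$ Moreover, for such data with $x_i\in(\mathcal D_i\otimes_{\max}\mathcal E_i)(n_i)$ for all $i$, the cones defined by the right-hand side contain $(\mathcal G\otimes_{\min}\mathcal H)(n)$.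
   Context: ${\rm Her}_n(\mathbb C)$: Hermitian $n\times n$ matrices; ${\rm Psd}_n(\mathbb C)$: positive semidefinite ones. An abstract operator system on a finite-dimensional real vector space $X$ is a family of closed convex cones $\mathcal G(n)\subseteq X\otimes{\rm Her}_n(\mathbb C)$, $n\geqslant1$, with $({\rm id}_X\otimes(A\mapsto V^*AV))(\mathcal G(n))\subseteq\mathcal G(m)$ for all $V\in\mathbb C^{n\times m}$, such that $\mathcal G(1)\subseteq X$ is proper (closed, convex, sharp, nonempty interior). Completely positive maps $\psi\colon X\to Y$: $(\psi\otimes{\rm id})(\mathcal G(n))\subseteq\mathcal H(n)$ for all $n$. Dual: $\mathcal G^\vee(n)=\mathcal G(n)^\vee\subseteq X'\otimes{\rm Her}_n(\mathbb C)$ w.r.t. $\langle x\otimes A,\ell\otimes B\rangle=\ell(x){\rm tr}(AB^T)$. $(\mathcal G\otimes_{\min}\mathcal H)(n)$ is the closed convex cone generated by all $({\rm id}\otimes(C\mapsto V^*CV))(\tau(g\otimes h))$, $g\in\mathcal G(k)$, $h\in\mathcal H(l)$, $V\in\mathbb C^{kl\times n}$, with $\tau$ the reordering into $X\otimes Y\otimes{\rm Her}_{kl}(\mathbb C)$ via Kronecker products; $\mathcal G\otimes_{\max}\mathcal H\coloneqq(\mathcal G^\vee\otimes_{\min}\mathcal H^\vee)^\vee$. For closed convex cones $K_j\subseteq U_j$, $K_1\otimes_{\max}\cdots\otimes_{\max}K_r=\{z\mid(\ell_1\otimes\cdots\otimes\ell_r)(z)\geqslant0\ \forall\ell_j\in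 K_j^\vee\}$, and $\pm K$ means $K\cup(-K)$. A functorial tensor product assigns to any two abstract operator systems $\mathcal G$ on $X$, $\mathcal H$ on $Y$ an abstract operator system $\mathcal G\otimes\mathcal H$ on $X\otimes Y$ such that $\varphi\otimes\psi$ is completely positive from $\mathcal G_1\otimes\mathcal H_1$ to $\mathcal G_2\otimes\mathcal H_2$ whenever $\varphi,\psi$ are completely positive. In the display, $x_i\otimes a\in V_i\otimes W_i\otimes{\rm Her}_{n_i}\otimes X\otimes Y\otimes{\rm Her}_n$ is regarded, after reordering and the Kronecker identification ${\rm Her}_{n_i}\otimes{\rm Her}_n={\rm Her}_{n_in}$, as an element of $(V_i\otimes X)\otimes(W_i\otimes Y)\otimes{\rm Her}_{n_in}(\mathbb C)$. *)

theory Defs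
  imports Complex_Main
begin

text \<open>A finite-dimensional real vector space X is modelled as R^d.
An element of R^d (x) Her_n(C) is a function z with z k i j the (i,j) entry of the
k-th Hermitian matrix component (k < d, i,j < n), and zero outside this range.
Tensor products of coordinate spaces use the Kronecker index k1*e + k2, and
Her_k (x) Her_l = Her_(kl) uses the Kronecker index i1*l + i2.\<close>

type_synonym elt = "nat \<Rightarrow> nat \<Rightarrow> nat \<Rightarrow> complex"
type_synonym osys = "nat \<Rightarrow> elt set"

definition carrier :: "nat \<Rightarrow> nat \<Rightarrow> elt set" where
  "carrier d n = {z. (\<forall>k i j. (d \<le> k \<or> n \<le> i \<or> n \<le> j) \<longrightarrow> z k i j = 0)
                    \<and> (\<forall>k i j. z k j i = cnj (z k i j))}"

definition zzero :: elt where "zzero = (\<lambda>k i j. 0)"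
definition zadd :: "elt \<Rightarrow> elt \<Rightarrow> elt" where "zadd z w = (\<lambda>k i j. z k i j + w k i j)"
definition zscale :: "real \<Rightarrow> elt \<Rightarrow> elt" where "zscale r z = (\<lambda>k i j. complex_of_real r * z k i j)"
definition zneg :: "elt \<Rightarrow> elt" where "zneg z = (\<lambda>k i j. - z k i j)"

definition cvx_cone :: "elt set \<Rightarrow> bool" where
  "cvx_cone K \<longleftrightarrow> K \<noteq> {} \<and> (\<forall>x\<in>K. \<forall>y\<in>K. zadd x y \<in> K)
                    \<and> (\<forall>x\<in>K. \<forall>r::real. r \<ge> 0 \<longrightarrow> zscale r x \<in> K)"

text \<open>Closedness (the sets considered live in a finite-dimensional carrier, where
pointwise convergence of all coordinates is the usual convergence).\<close>
definition seq_closed :: "elt set \<Rightarrow> bool" where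
  "seq_closed K \<longleftrightarrow> (\<forall>s z. (\<forall>m. s m \<in> K) \<longrightarrow> (\<forall>k i j. (\<lambda>m. s m k i j) \<longlonglongrightarrow> z k i j) \<longrightarrow> z \<in> K)"

definition proper_cone :: "nat \<Rightarrow> elt set \<Rightarrow> bool" where
  "proper_cone d K \<longleftrightarrow> K \<subseteq> carrier d 1 \<and> cvx_cone K \<and> seq_closed K
     \<and> (\<forall>z\<in>K. zneg z \<in> K \<longrightarrow> z = zzero)
     \<and> (\<exists>z\<in>K. \<exists>e>0. \<forall>w\<in>carrier d 1. (\<Sum>k<d. cmod (w k 0 0 - z k 0 0)) < e \<longrightarrow> w \<in> K)"

definition compress :: "nat \<Rightarrow> nat \<Rightarrow> (nat \<Rightarrow> nat \<Rightarrow> complex) \<Rightarrow> elt \<Rightarrow> elt" where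
  "compress n m V z = (\<lambda>k i j. if i < m \<and> j < m then
      (\<Sum>p<n. \<Sum>q<n. cnj (V p i) * z k p q * V q j) else 0)"

definition aos :: "nat \<Rightarrow> osys \<Rightarrow> bool" where
  "aos d G \<longleftrightarrow> (\<forall>n\<ge>1. G n \<subseteq> carrier d n \<and> cvx_cone (G n) \<and> seq_closed (G n))
     \<and> (\<forall>n\<ge>1. \<forall>m\<ge>1. \<forall>V. \<forall>z\<in>G n. compress n m V z \<in> G m)
     \<and> proper_cone d (G 1)"

definition lin_apply :: "nat \<Rightarrow> nat \<Rightarrow> (nat \<Rightarrow> nat \<Rightarrow> real) \<Rightarrow> elt \<Rightarrow> elt" where
  "lin_apply d1 d2 M z = (\<lambda>k i j. if k < d2 then (\<Sum>l<d1. complex_of_real (M k l) * z l i j) else 0)"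

definition cp_map :: "nat \<Rightarrow> osys \<Rightarrow> nat \<Rightarrow> osys \<Rightarrow> (nat \<Rightarrow> nat \<Rightarrow> real) \<Rightarrow> bool" where
  "cp_map d1 G d2 H M \<longleftrightarrow> (\<forall>n\<ge>1. \<forall>z\<in>G n. lin_apply d1 d2 M z \<in> H n)"

definition kron_lin :: "nat \<Rightarrow> nat \<Rightarrow> (nat \<Rightarrow> nat \<Rightarrow> real) \<Rightarrow> (nat \<Rightarrow> nat \<Rightarrow> real) \<Rightarrow> (nat \<Rightarrow> nat \<Rightarrow> real)" where
  "kron_lin e1 e2 M N = (\<lambda>c' c. M (c' div e2) (c div e1) * N (c' mod e2) (c mod e1))"

definition functorial_tp :: "(nat \<Rightarrow> osys \<Rightarrow> nat \<Rightarrow> osys \<Rightarrow> osys) \<Rightarrow> bool" where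
  "functorial_tp T \<longleftrightarrow>
     (\<forall>d G e H. aos d G \<longrightarrow> aos e H \<longrightarrow> aos (d * e) (T d G e H))
   \<and> (\<forall>d1 G1 d2 G2 e1 H1 e2 H2 M N. aos d1 G1 \<longrightarrow> aos d2 G2 \<longrightarrow> aos e1 H1 \<longrightarrow> aos e2 H2 \<longrightarrow>
        cp_map d1 G1 d2 G2 M \<longrightarrow> cp_map e1 H1 e2 H2 N \<longrightarrow>
        cp_map (d1 * e1) (T d1 G1 e1 H1) (d2 * e2) (T d2 G2 e2 H2) (kron_lin e1 e2 M N))"

text \<open>Pairing <x (x) A, l (x) B> = l(x) tr(A B^T).\<close>
definition pair :: "nat \<Rightarrow> nat \<Rightarrow> elt \<Rightarrow> elt \<Rightarrow> real" where
  "pair d n z w = Re (\<Sum>k<d. \<Sum>i<n. \<Sum>j<n. z k i j * w k i j)"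

definition dual_cone :: "nat \<Rightarrow> nat \<Rightarrow> elt set \<Rightarrow> elt set" where
  "dual_cone d n K = {w \<in> carrier d n. \<forall>z\<in>K. pair d n z w \<ge> 0}"

definition dual_sys :: "nat \<Rightarrow> osys \<Rightarrow> osys" where
  "dual_sys d G = (\<lambda>n. dual_cone d n (G n))"

definition cc_hull :: "nat \<Rightarrow> nat \<Rightarrow> elt set \<Rightarrow> elt set" where
  "cc_hull d n S = \<Inter>{K. K \<subseteq> carrier d n \<and> cvx_cone K \<and> seq_closed K \<and> S \<subseteq> K}"

text \<open>tau(g (x) h) in (X (x) Y) (x) Her_(kl), Kronecker identifications.\<close>
definition tau :: "nat \<Rightarrow> nat \<Rightarrow> nat \<Rightarrow> nat \<Rightarrow> elt \<Rightarrow> elt \<Rightarrow> elt" where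
  "tau d e k l g h = (\<lambda>c r s. if c < d * e \<and> r < k * l \<and> s < k * l then
      g (c div e) (r div l) (s div l) * h (c mod e) (r mod l) (s mod l) else 0)"

definition min_tp :: "nat \<Rightarrow> osys \<Rightarrow> nat \<Rightarrow> osys \<Rightarrow> osys" where
  "min_tp d G e H = (\<lambda>n. cc_hull (d * e) n
      {compress (k * l) n V (tau d e k l g h) | k l g h V. 1 \<le> k \<and> 1 \<le> l \<and> g \<in> G k \<and> h \<in> H l})"

definition max_tp :: "nat \<Rightarrow> osys \<Rightarrow> nat \<Rightarrow> osys \<Rightarrow> osys" where
  "max_tp d G e H = dual_sys (d * e) (min_tp d (dual_sys d G) e (dual_sys e H))"

definition psd :: "nat \<Rightarrow> elt set" where
  "psd m = {z \<in> carrier 1 m. \<forall>v::nat \<Rightarrow> complex.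
              Re (\<Sum>i<m. \<Sum>j<m. cnj (v i) * z 0 i j * v j) \<ge> 0}"

text \<open>K1 (x)max K2 (x)max K3 for K1 in R^d1, K2 in R^d2 (elements with n = 1)
and K3 in Her_m (elements with d = 1).\<close>
definition trip_eval :: "nat \<Rightarrow> nat \<Rightarrow> nat \<Rightarrow> elt \<Rightarrow> elt \<Rightarrow> elt \<Rightarrow> elt \<Rightarrow> real" where
  "trip_eval d1 d2 m l1 l2 l3 z = Re (\<Sum>k1<d1. \<Sum>k2<d2. \<Sum>i<m. \<Sum>j<m.
      l1 k1 0 0 * l2 k2 0 0 * l3 0 i j * z (k1 * d2 + k2) i j)"

definition cmax3 :: "nat \<Rightarrow> elt set \<Rightarrow> nat \<Rightarrow> elt set \<Rightarrow> nat \<Rightarrow> elt set \<Rightarrow> elt set" where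
  "cmax3 d1 K1 d2 K2 m K3 = {z \<in> carrier (d1 * d2) m.
      \<forall>l1\<in>dual_cone d1 1 K1. \<forall>l2\<in>dual_cone d2 1 K2. \<forall>l3\<in>dual_cone 1 m K3.
        trip_eval d1 d2 m l1 l2 l3 z \<ge> 0}"

definition pm :: "elt set \<Rightarrow> elt set" where
  "pm K = K \<union> zneg ` K"

text \<open>x (x) a, with x in V (x) W (x) Her_ni and a in X (x) Y (x) Her_n, regarded as an
element of (V (x) X) (x) (W (x) Y) (x) Her_(ni n).\<close>
definition xa_tensor :: "nat \<Rightarrow> nat \<Rightarrow> nat \<Rightarrow> elt \<Rightarrow> nat \<Rightarrow> nat \<Rightarrow> nat \<Rightarrow> elt \<Rightarrow> elt" where
  "xa_tensor dv dw ni x dx dy n a = (\<lambda>c r s.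
     if c < (dv * dx) * (dw * dy) \<and> r < ni * n \<and> s < ni * n then
       (let p = c div (dw * dy); q = c mod (dw * dy);
            kv = p div dx; kx = p mod dx; kw = q div dy; ky = q mod dy
        in x (kv * dw + kw) (r div n) (s div n) * a (kx * dy + ky) (r mod n) (s mod n))
     else 0)"

end

theory Submission
  imports Defs "HOL-Analysis.Analysis"
begin


definition zsub :: "elt \<Rightarrow> elt \<Rightarrow> elt" where "zsub z w = (\<lambda>k i j. z k i j - w k i j)"
definition cnjf :: "elt \<Rightarrow> elt" where "cnjf z = (\<lambda>k i j. cnj (z k i j))"
definition ip :: "nat \<Rightarrow> nat \<Rightarrow> elt \<Rightarrow> elt \<Rightarrow> real" where
  "ip d n z w = (\<Sum>k<d. \<Sum>i<n. \<Sum>j<n. Re (z k i j * cnj (w k i j)))"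
definition cto :: "(nat \<Rightarrow> elt) \<Rightarrow> elt \<Rightarrow> bool" where
  "cto s z \<longleftrightarrow> (\<forall>k i j. (\<lambda>m. s m k i j) \<longlonglongrightarrow> z k i j)"

lemma pair_cnjf: "pair d n z (cnjf w) = ip d n z w"
  by (simp add: pair_def ip_def cnjf_def Re_sum)

lemma ip_sym: "ip d n z w = ip d n w z"
  unfolding ip_def by (intro sum.cong refl) (simp add: algebra_simps)

lemma ip_sub_left: "ip d n (zsub a b) c = ip d n a c - ip d n b c"
  unfolding ip_def zsub_def by (simp add: sum_subtractf algebra_simps)

lemma ip_sub_right: "ip d n c (zsub a b) = ip d n c a - ip d n c b"
  using ip_sub_left ip_sym by metis

lemma re_mult_cnj: "Re (z * cnj z) = (cmod z)\<^sup>2"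
  using cmod_power2[of z] by (simp add: power2_eq_square)

lemma ip_self_nonneg: "0 \<le> ip d n z z"
  unfolding ip_def by (intro sum_nonneg) (simp add: re_mult_cnj)

lemma cmod_sq_le_ip:
  assumes "k < d" "i < n" "j < n"
  shows "(cmod (z k i j))\<^sup>2 \<le> ip d n z z"
proof -
  have a: "\<And>k i j. 0 \<le> Re (z k i j * cnj (z k i j))" by (simp add: re_mult_cnj)
  have "Re (z k i j * cnj (z k i j)) \<le> (\<Sum>j<n. Re (z k i j * cnj (z k i j)))"
    using assms by (intro member_le_sum) (auto simp: a)
  also have "\<dots> \<le> (\<Sum>i<n. \<Sum>j<n. Re (z k i j * cnj (z k i j)))"
    using assms by (intro member_le_sum[where f="\<lambda>i. \<Sum>j<n. Re (z k i j * cnj (z k i j))"]) (auto intro!: sum_nonneg simp: a)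
  also have "\<dots> \<le> ip d n z z" unfolding ip_def
    using assms by (intro member_le_sum[where f="\<lambda>k. \<Sum>i<n. \<Sum>j<n. Re (z k i j * cnj (z k i j))"]) (auto intro!: sum_nonneg simp: a)
  finally show ?thesis by (simp only: re_mult_cnj)
qed

lemma ip_zero_imp:
  assumes "ip d n z z = 0" "k < d" "i < n" "j < n"
  shows "z k i j = 0"
  using cmod_sq_le_ip[OF assms(2-4), of z] assms(1) by simp

lemma cto_ip:
  assumes "cto s z" "cto t y"
  shows "(\<lambda>m. ip d n (s m) (t m)) \<longlonglongrightarrow> ip d n z y"
  using assms unfolding ip_def cto_def by (auto intro!: tendsto_intros)

lemma cto_zsub: "cto s z \<Longrightarrow> cto t y \<Longrightarrow> cto (\<lambda>m. zsub (s m) (t m)) (zsub z y)"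
  unfolding cto_def zsub_def by (auto intro!: tendsto_intros)

lemma cto_const: "cto (\<lambda>m. z) z"
  unfolding cto_def by auto

lemma carrier_zero: "z \<in> carrier d n \<Longrightarrow> d \<le> k \<or> n \<le> i \<or> n \<le> j \<Longrightarrow> z k i j = 0"
  unfolding carrier_def by blast

lemma carrier_zero': "z \<in> carrier d n \<Longrightarrow> \<not> (k < d \<and> i < n \<and> j < n) \<Longrightarrow> z k i j = 0"
  using carrier_zero by (meson not_le)

lemma carrier_herm: "z \<in> carrier d n \<Longrightarrow> z k j i = cnj (z k i j)"
  unfolding carrier_def by blast

lemma carrierI:
  assumes "\<And>k i j. d \<le> k \<or> n \<le> i \<or> n \<le> j \<Longrightarrow> z k i j = 0"
    "\<And>k i j. z k j i = cnj (z k i j)"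
  shows "z \<in> carrier d n"
  unfolding carrier_def using assms by blast

lemma carrierI':
  assumes "\<And>k i j. \<not> (k < d \<and> i < n \<and> j < n) \<Longrightarrow> z k i j = 0"
    "\<And>k i j. z k j i = cnj (z k i j)"
  shows "z \<in> carrier d n"
proof (rule carrierI)
  fix k i j assume "d \<le> k \<or> n \<le> i \<or> n \<le> j" then show "z k i j = 0" using assms(1) by (meson not_le)
next
  fix k i j show "z k j i = cnj (z k i j)" by (rule assms(2))
qed

lemma carrier_closed:
  assumes "\<forall>m. s m \<in> carrier d n" "cto s z"
  shows "z \<in> carrier d n"
proof (rule carrierI)
  fix k i j
  assume that: "d \<le> k \<or> n \<le> i \<or> n \<le> j"
  have "(\<lambda>m. s m k i j) = (\<lambda>m. 0)" using assms(1) that by (auto intro: carrier_zero)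
  then have "(\<lambda>m. 0::complex) \<longlonglongrightarrow> z k i j" using assms(2) unfolding cto_def by metis
  then show "z k i j = 0" using LIMSEQ_unique tendsto_const by blast
next
  fix k i j
  have "(\<lambda>m. s m k j i) = (\<lambda>m. cnj (s m k i j))" using assms(1) by (auto intro: carrier_herm)
  moreover have "(\<lambda>m. cnj (s m k i j)) \<longlonglongrightarrow> cnj (z k i j)"
    using assms(2) unfolding cto_def by (auto intro!: tendsto_intros)
  ultimately show "z k j i = cnj (z k i j)" using assms(2) unfolding cto_def by (metis LIMSEQ_unique)
qed

lemma carrier_eqI:
  assumes "z \<in> carrier d n" "w \<in> carrier d n" "\<And>k i j. k < d \<Longrightarrow> i < n \<Longrightarrow> j < n \<Longrightarrow> z k i j = w k i j"
  shows "z = w"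
proof (intro ext)
  fix k i j
  show "z k i j = w k i j"
  proof (cases "k < d \<and> i < n \<and> j < n")
    case True then show ?thesis using assms(3) by auto
  next
    case False then show ?thesis using carrier_zero'[OF assms(1) False] carrier_zero'[OF assms(2) False] by simp
  qed
qed

lemma zsub_carrier: "z \<in> carrier d n \<Longrightarrow> w \<in> carrier d n \<Longrightarrow> zsub z w \<in> carrier d n"
  by (rule carrierI) (auto simp: zsub_def carrier_zero, metis carrier_herm complex_cnj_diff)

lemma cnjf_carrier: "z \<in> carrier d n \<Longrightarrow> cnjf z \<in> carrier d n"
  by (rule carrierI) (auto simp: cnjf_def carrier_zero, metis carrier_herm complex_cnj_cnj)


lemma par_coord:
  fixes a b q :: complex
  shows "Re ((a - b) * cnj (a - b)) = 2 * Re ((a - q) * cnj (a - q)) + 2 * Re ((b - q) * cnj (b - q))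
     - 4 * Re ((complex_of_real (1/2) * a + complex_of_real (1 - 1/2) * b - q) * cnj (complex_of_real (1/2) * a + complex_of_real (1 - 1/2) * b - q))"
  by (simp add: algebra_simps power2_eq_square) (simp add: field_simps)

lemma var_coord:
  fixes a y q :: complex and t :: real
  shows "Re ((complex_of_real t * y + complex_of_real (1 - t) * a - q) * cnj (complex_of_real t * y + complex_of_real (1 - t) * a - q))
     = Re ((a - q) * cnj (a - q)) + 2 * t * Re ((a - q) * cnj (y - a)) + t\<^sup>2 * Re ((y - a) * cnj (y - a))"
  by (simp add: algebra_simps power2_eq_square)


definition convex_set :: "elt set \<Rightarrow> bool" where
  "convex_set S \<longleftrightarrow> (\<forall>x\<in>S. \<forall>y\<in>S. \<forall>t::real. 0 \<le> t \<and> t \<le> 1 \<longrightarrow> zadd (zscale t x) (zscale (1-t) y) \<in> S)"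

lemma ip_par:
  "ip d n (zsub x y) (zsub x y) = 2 * ip d n (zsub x p) (zsub x p) + 2 * ip d n (zsub y p) (zsub y p)
    - 4 * ip d n (zsub (zadd (zscale (1/2) x) (zscale (1-1/2) y)) p) (zsub (zadd (zscale (1/2) x) (zscale (1-1/2) y)) p)"
proof -
  have eq: "\<And>k i j. Re ((x k i j - y k i j) * cnj (x k i j - y k i j)) = 2 * Re ((x k i j - p k i j) * cnj (x k i j - p k i j)) + 2 * Re ((y k i j - p k i j) * cnj (y k i j - p k i j))
     - 4 * Re ((complex_of_real (1/2) * x k i j + complex_of_real (1 - 1/2) * y k i j - p k i j) * cnj (complex_of_real (1/2) * x k i j + complex_of_real (1 - 1/2) * y k i j - p k i j))"
    by (rule par_coord)
  show ?thesis
    unfolding ip_def zsub_def zadd_def zscale_def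
    by (simp only: eq sum.distrib sum_subtractf sum_distrib_left)
qed

lemma ip_var:
  "ip d n (zsub (zadd (zscale t y) (zscale (1-t) a)) q) (zsub (zadd (zscale t y) (zscale (1-t) a)) q)
   = ip d n (zsub a q) (zsub a q) + 2 * t * ip d n (zsub a q) (zsub y a) + t\<^sup>2 * ip d n (zsub y a) (zsub y a)"
proof -
  have eq: "\<And>k i j. Re ((complex_of_real t * y k i j + complex_of_real (1 - t) * a k i j - q k i j) * cnj (complex_of_real t * y k i j + complex_of_real (1 - t) * a k i j - q k i j))
     = Re ((a k i j - q k i j) * cnj (a k i j - q k i j)) + 2 * t * Re ((a k i j - q k i j) * cnj (y k i j - a k i j)) + t\<^sup>2 * Re ((y k i j - a k i j) * cnj (y k i j - a k i j))"
    by (rule var_coord)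
  show ?thesis
    unfolding ip_def zsub_def zadd_def zscale_def
    by (simp only: eq sum.distrib sum_subtractf sum_distrib_left)
qed

lemma separation:
  assumes SC: "S \<subseteq> carrier d n" and cv: "convex_set S" and ne: "S \<noteq> {}" and p: "p \<in> carrier d n"
    and nl: "\<not> (\<exists>s. (\<forall>m. s m \<in> S) \<and> cto s p)"
  shows "\<exists>w\<in>carrier d n. \<exists>\<delta>>0. \<forall>y\<in>S. pair d n p w + \<delta> \<le> pair d n y w"
proof -
  define D where "D y = ip d n (zsub y p) (zsub y p)" for y
  define \<delta>0 where "\<delta>0 = Inf (D ` S)"
  have D0: "0 \<le> D y" for y unfolding D_def by (rule ip_self_nonneg)
  have bdd: "bdd_below (D ` S)" using D0 by (auto intro: bdd_belowI[of _ 0])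
  have low: "\<delta>0 \<le> D y" if "y \<in> S" for y unfolding \<delta>0_def by (rule cInf_lower) (use bdd that in auto)
  have \<delta>0nn: "0 \<le> \<delta>0" unfolding \<delta>0_def using ne D0 by (intro cInf_greatest) auto
  have "\<exists>y\<in>S. D y < \<delta>0 + 1 / real (Suc m)" for m
  proof -
    have "Inf (D ` S) < \<delta>0 + 1 / real (Suc m)" unfolding \<delta>0_def by simp
    then show ?thesis using cInf_lessD[of "D ` S"] ne by auto
  qed
  then obtain ys where ys: "\<And>m. ys m \<in> S" "\<And>m. D (ys m) < \<delta>0 + 1 / real (Suc m)" by metis
  have ysC: "ys m \<in> carrier d n" for m using ys(1) SC by auto
  have midS: "zadd (zscale (1/2) x) (zscale (1-1/2) y) \<in> S" if "x \<in> S" "y \<in> S" for x y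
  proof -
    have "0 \<le> (1/2::real) \<and> (1/2::real) \<le> 1" by simp
    then show ?thesis using cv that unfolding convex_set_def by blast
  qed
  have cb: "ip d n (zsub (ys m) (ys m')) (zsub (ys m) (ys m')) \<le> 2 / real (Suc m) + 2 / real (Suc m')" for m m'
    using ip_par[of d n "ys m" "ys m'" p] low[OF midS[OF ys(1)[of m] ys(1)[of m']]] ys(2)[of m] ys(2)[of m']
      divide_inverse[of 2 "real (Suc m)"] divide_inverse[of 1 "real (Suc m)"]
      divide_inverse[of 2 "real (Suc m')"] divide_inverse[of 1 "real (Suc m')"] unfolding D_def
    by linarith
  have conv: "convergent (\<lambda>m. ys m k i j)" for k i j
  proof (cases "k < d \<and> i < n \<and> j < n")
    case False
    then have "(\<lambda>m. ys m k i j) = (\<lambda>m. 0)" using ysC carrier_zero' by blast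
    then show ?thesis by (simp add: convergent_const)
  next
    case True
    show ?thesis unfolding Cauchy_convergent_iff[symmetric] Cauchy_def
    proof (intro allI impI)
      fix e :: real assume e: "0 < e"
      then have "0 < e\<^sup>2 / 4" by simp
      then obtain N where N0: "N > 0" and N: "inverse (real N) < e\<^sup>2 / 4" using ex_inverse_of_nat_less by blast
      show "\<exists>M. \<forall>m\<ge>M. \<forall>m'\<ge>M. dist (ys m k i j) (ys m' k i j) < e"
      proof (intro exI allI impI)
        fix m m' assume mm: "N \<le> m" "N \<le> m'"
        have a: "1 / real (Suc m) \<le> inverse (real N)" using mm N0 by (simp add: divide_inverse le_imp_inverse_le)
        have b: "1 / real (Suc m') \<le> inverse (real N)" using mm N0 by (simp add: divide_inverse le_imp_inverse_le)
        have "(cmod (ys m k i j - ys m' k i j))\<^sup>2 \<le> ip d n (zsub (ys m) (ys m')) (zsub (ys m) (ys m'))"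
          using cmod_sq_le_ip[of k d i n j "zsub (ys m) (ys m')"] True by (simp add: zsub_def)
        also have "\<dots> \<le> 2 / real (Suc m) + 2 / real (Suc m')" by (rule cb)
        also have "\<dots> < e\<^sup>2" using a b N by simp
        finally have "(cmod (ys m k i j - ys m' k i j))\<^sup>2 < e\<^sup>2" .
        then have "cmod (ys m k i j - ys m' k i j) < e" using e by (meson power_less_imp_less_base less_imp_le)
        then show "dist (ys m k i j) (ys m' k i j) < e" by (simp add: dist_norm)
      qed
    qed
  qed
  define z where "z = (\<lambda>k i j. lim (\<lambda>m. ys m k i j))"
  have cz: "cto ys z" unfolding cto_def z_def using conv by (simp add: convergent_LIMSEQ_iff)
  have zC: "z \<in> carrier d n" by (rule carrier_closed[OF _ cz]) (use ysC in auto)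
  have Dz_lim: "(\<lambda>m. D (ys m)) \<longlonglongrightarrow> D z" unfolding D_def by (intro cto_ip cto_zsub cz cto_const)
  have Dlim: "(\<lambda>m. D (ys m)) \<longlonglongrightarrow> \<delta>0"
  proof (rule real_tendsto_sandwich[of "\<lambda>m. \<delta>0" _ _ "\<lambda>m. \<delta>0 + inverse (real (Suc m))"])
    show "eventually (\<lambda>m. \<delta>0 \<le> D (ys m)) sequentially" using low ys(1) by auto
    show "eventually (\<lambda>m. D (ys m) \<le> \<delta>0 + inverse (real (Suc m))) sequentially"
    proof (rule always_eventually, rule allI)
      fix m show "D (ys m) \<le> \<delta>0 + inverse (real (Suc m))" using ys(2)[of m] by (simp add: divide_inverse)
    qed
    show "(\<lambda>m. \<delta>0) \<longlonglongrightarrow> \<delta>0" by simp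
    show "(\<lambda>m. \<delta>0 + inverse (real (Suc m))) \<longlonglongrightarrow> \<delta>0"
      using tendsto_add[OF tendsto_const LIMSEQ_inverse_real_of_nat, of \<delta>0] by simp
  qed
  have Dz: "D z = \<delta>0" using LIMSEQ_unique[OF Dz_lim Dlim] .
  have \<delta>pos: "0 < \<delta>0"
  proof (rule ccontr)
    assume "\<not> 0 < \<delta>0" then have "D z = 0" using Dz \<delta>0nn by simp
    then have "zsub z p k i j = 0" if "k < d" "i < n" "j < n" for k i j
      using ip_zero_imp that unfolding D_def by blast
    then have "z = p" by (intro carrier_eqI[OF zC p]) (simp add: zsub_def)
    then show False using nl ys(1) cz by auto
  qed
  have var: "0 \<le> ip d n (zsub z p) (zsub y z)" if yS: "y \<in> S" for y
  proof -
    let ?I = "ip d n (zsub z p) (zsub y z)"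
    let ?N = "ip d n (zsub y z) (zsub y z)"
    have ineq: "0 \<le> 2 * ?I + t * ?N" if t: "0 < t" "t \<le> 1" for t
    proof -
      have "\<delta>0 \<le> D (ys m) + 2 * t * ip d n (zsub (ys m) p) (zsub y (ys m)) + t\<^sup>2 * ip d n (zsub y (ys m)) (zsub y (ys m))" for m
      proof -
        have "zadd (zscale t y) (zscale (1-t) (ys m)) \<in> S" using cv yS ys(1) t unfolding convex_set_def by auto
        then have "\<delta>0 \<le> D (zadd (zscale t y) (zscale (1-t) (ys m)))" by (rule low)
        also have "\<dots> = D (ys m) + 2 * t * ip d n (zsub (ys m) p) (zsub y (ys m)) + t\<^sup>2 * ip d n (zsub y (ys m)) (zsub y (ys m))"
          unfolding D_def by (rule ip_var)
        finally show ?thesis .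
      qed
      moreover have "(\<lambda>m. D (ys m) + 2 * t * ip d n (zsub (ys m) p) (zsub y (ys m)) + t\<^sup>2 * ip d n (zsub y (ys m)) (zsub y (ys m)))
          \<longlonglongrightarrow> \<delta>0 + 2 * t * ?I + t\<^sup>2 * ?N"
        by (intro tendsto_intros Dlim cto_ip cto_zsub cz cto_const)
      ultimately have "\<delta>0 \<le> \<delta>0 + 2 * t * ?I + t\<^sup>2 * ?N"
        by (intro LIMSEQ_le_const) auto
      then have "0 \<le> t * (2 * ?I + t * ?N)" by (simp add: power2_eq_square algebra_simps)
      then show ?thesis using t by (simp add: zero_le_mult_iff)
    qed
    show ?thesis
    proof (rule ccontr)
      assume neg: "\<not> 0 \<le> ?I"
      have Npos: "0 < ?N" using ineq[of 1] neg by simp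
      define t where "t = min 1 (- ?I / ?N)"
      have t0: "0 < t" using neg Npos by (simp add: t_def divide_neg_pos)
      have t1: "t \<le> 1" by (simp add: t_def)
      have "t * ?N \<le> (- ?I / ?N) * ?N" using Npos by (intro mult_right_mono) (auto simp: t_def)
      then have "t * ?N \<le> - ?I" using Npos by simp
      then show False using ineq[OF t0 t1] neg by linarith
    qed
  qed
  define w where "w = cnjf (zsub z p)"
  have wC: "w \<in> carrier d n" using zC p by (simp add: w_def cnjf_carrier zsub_carrier)
  show ?thesis
  proof (intro bexI[OF _ wC] exI[of _ \<delta>0] conjI ballI \<delta>pos)
    fix y assume yS: "y \<in> S"
    have "pair d n y w - pair d n p w = ip d n (zsub y p) (zsub z p)" by (simp add: w_def pair_cnjf ip_sub_left)
    also have "\<dots> = ip d n (zsub z p) (zsub y p)" by (rule ip_sym)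
    also have "\<dots> = ip d n (zsub z p) (zsub y z) + ip d n (zsub z p) (zsub z p)"
      by (simp add: ip_sub_right)
    finally have "pair d n y w - pair d n p w = ip d n (zsub z p) (zsub y z) + D z" unfolding D_def .
    then show "pair d n p w + \<delta>0 \<le> pair d n y w" using var[OF yS] Dz by linarith
  qed
qed


lemma pair_zscale_left: "pair d n (zscale t y) w = t * pair d n y w"
  by (simp add: pair_def zscale_def sum_distrib_left mult.assoc Re_sum)

lemma pair_zscale_right: "pair d n y (zscale t w) = t * pair d n y w"
  by (simp add: pair_def zscale_def sum_distrib_left mult.left_commute Re_sum)

lemma pair_zadd_left: "pair d n (zadd y y') w = pair d n y w + pair d n y' w"
  by (simp add: pair_def zadd_def sum.distrib ring_distribs Re_sum)

lemma pair_zadd_right: "pair d n y (zadd w w') = pair d n y w + pair d n y w'"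
  by (simp add: pair_def zadd_def sum.distrib ring_distribs Re_sum)

lemma pair_sym: "pair d n z w = pair d n w z"
  by (simp add: pair_def mult.commute)

lemma pair_zzero_left[simp]: "pair d n zzero w = 0"
  by (simp add: pair_def zzero_def)

lemma pair_zzero_right[simp]: "pair d n w zzero = 0"
  by (simp add: pair_def zzero_def)

lemma zscale_zero[simp]: "zscale 0 x = zzero"
  by (simp add: zscale_def zzero_def)

lemma cone_zero: "cvx_cone K \<Longrightarrow> zzero \<in> K"
  unfolding cvx_cone_def by (metis all_not_in_conv order_refl zscale_zero)

lemma cone_add: "cvx_cone K \<Longrightarrow> x \<in> K \<Longrightarrow> y \<in> K \<Longrightarrow> zadd x y \<in> K"
  unfolding cvx_cone_def by blast

lemma cone_scale: "cvx_cone K \<Longrightarrow> x \<in> K \<Longrightarrow> 0 \<le> r \<Longrightarrow> zscale r x \<in> K"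
  unfolding cvx_cone_def by blast

lemma cvx_coneI: "zzero \<in> K \<Longrightarrow> (\<And>x y. x \<in> K \<Longrightarrow> y \<in> K \<Longrightarrow> zadd x y \<in> K)
   \<Longrightarrow> (\<And>x r. x \<in> K \<Longrightarrow> 0 \<le> r \<Longrightarrow> zscale r x \<in> K) \<Longrightarrow> cvx_cone K"
  unfolding cvx_cone_def by blast

lemma cone_convex: "cvx_cone K \<Longrightarrow> convex_set K"
  unfolding convex_set_def by (auto intro!: cone_add cone_scale)

lemma seq_closed_cto: "seq_closed K \<Longrightarrow> (\<forall>m. s m \<in> K) \<Longrightarrow> cto s z \<Longrightarrow> z \<in> K"
  unfolding seq_closed_def cto_def by blast

lemma seq_closedI: "(\<And>s z. (\<forall>m. s m \<in> K) \<Longrightarrow> cto s z \<Longrightarrow> z \<in> K) \<Longrightarrow> seq_closed K"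
  unfolding seq_closed_def cto_def by blast

lemma zzero_carrier: "zzero \<in> carrier d n"
  by (rule carrierI) (simp_all add: zzero_def)

lemma zadd_carrier: "z \<in> carrier d n \<Longrightarrow> w \<in> carrier d n \<Longrightarrow> zadd z w \<in> carrier d n"
  by (rule carrierI) (auto simp: zadd_def carrier_zero, metis carrier_herm complex_cnj_add)

lemma zscale_carrier: "z \<in> carrier d n \<Longrightarrow> zscale r z \<in> carrier d n"
  by (rule carrierI) (auto simp: zscale_def carrier_zero, metis carrier_herm complex_cnj_mult complex_cnj_complex_of_real)

lemma zneg_carrier: "z \<in> carrier d n \<Longrightarrow> zneg z \<in> carrier d n"
  by (rule carrierI) (auto simp: zneg_def carrier_zero, metis carrier_herm complex_cnj_minus)

lemma carrier_cone: "cvx_cone (carrier d n)"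
  by (intro cvx_coneI zzero_carrier zadd_carrier zscale_carrier)

lemma carrier_sclosed: "seq_closed (carrier d n)"
  by (intro seq_closedI) (auto intro: carrier_closed)

lemma cto_pair: "cto s z \<Longrightarrow> cto t y \<Longrightarrow> (\<lambda>m. pair d n (s m) (t m)) \<longlonglongrightarrow> pair d n z y"
  unfolding pair_def cto_def by (auto intro!: tendsto_intros)

lemma halfspace_cone: "cvx_cone {z \<in> carrier d n. 0 \<le> pair d n z w}"
  by (intro cvx_coneI) (auto simp: zzero_carrier zadd_carrier zscale_carrier pair_zadd_left pair_zscale_left)

lemma halfspace_closed: "seq_closed {z \<in> carrier d n. 0 \<le> pair d n z w}"
proof (intro seq_closedI)
  fix s z assume a: "\<forall>m. s m \<in> {z \<in> carrier d n. 0 \<le> pair d n z w}" "cto s z"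
  have "z \<in> carrier d n" using a by (intro carrier_closed[of s]) auto
  moreover have "0 \<le> pair d n z w"
    using a by (intro LIMSEQ_le_const[OF cto_pair[OF a(2) cto_const]]) auto
  ultimately show "z \<in> {z \<in> carrier d n. 0 \<le> pair d n z w}" by simp
qed

lemma dual_cone_carrier: "dual_cone d n K \<subseteq> carrier d n"
  unfolding dual_cone_def by auto

lemma dual_cone_cone: "cvx_cone (dual_cone d n K)"
  unfolding dual_cone_def
  by (intro cvx_coneI) (auto simp: zzero_carrier zadd_carrier zscale_carrier pair_zadd_right pair_zscale_right)

lemma dual_cone_closed: "seq_closed (dual_cone d n K)"
proof (intro seq_closedI)
  fix s z assume a: "\<forall>m. s m \<in> dual_cone d n K" "cto s z"
  have "z \<in> carrier d n" using a by (intro carrier_closed[of s]) (auto simp: dual_cone_def)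
  moreover have "0 \<le> pair d n y z" if "y \<in> K" for y
    using a that by (intro LIMSEQ_le_const[OF cto_pair[OF cto_const a(2)]]) (auto simp: dual_cone_def)
  ultimately show "z \<in> dual_cone d n K" by (simp add: dual_cone_def)
qed

lemma cc_hull_sub: "K \<subseteq> carrier d n \<Longrightarrow> cvx_cone K \<Longrightarrow> seq_closed K \<Longrightarrow> S \<subseteq> K \<Longrightarrow> cc_hull d n S \<subseteq> K"
  unfolding cc_hull_def by blast

lemma cc_hull_carrier: "S \<subseteq> carrier d n \<Longrightarrow> cc_hull d n S \<subseteq> carrier d n"
  by (intro cc_hull_sub carrier_cone carrier_sclosed) auto

lemma cc_hull_gen: "S \<subseteq> cc_hull d n S"
  unfolding cc_hull_def by blast

lemma cc_hull_cone: "S \<subseteq> carrier d n \<Longrightarrow> cvx_cone (cc_hull d n S)"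
proof (intro cvx_coneI)
  assume S: "S \<subseteq> carrier d n"
  show "zzero \<in> cc_hull d n S" unfolding cc_hull_def by (auto intro: cone_zero)
  show "zadd x y \<in> cc_hull d n S" if "x \<in> cc_hull d n S" "y \<in> cc_hull d n S" for x y
    using that unfolding cc_hull_def by (auto intro: cone_add)
  show "zscale r x \<in> cc_hull d n S" if "x \<in> cc_hull d n S" "0 \<le> r" for x r
    using that unfolding cc_hull_def by (auto intro: cone_scale)
qed

lemma cc_hull_closed: "seq_closed (cc_hull d n S)"
proof (intro seq_closedI)
  fix s z assume a: "\<forall>m. s m \<in> cc_hull d n S" "cto s z"
  show "z \<in> cc_hull d n S" unfolding cc_hull_def
  proof (intro InterI)
    fix K assume K: "K \<in> {K. K \<subseteq> carrier d n \<and> cvx_cone K \<and> seq_closed K \<and> S \<subseteq> K}"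
    then have "\<forall>m. s m \<in> K" using a(1) unfolding cc_hull_def by blast
    then show "z \<in> K" using K a(2) seq_closed_cto by blast
  qed
qed

lemma cc_hull_halfspace:
  assumes "S \<subseteq> carrier d n" "\<And>s. s \<in> S \<Longrightarrow> 0 \<le> pair d n s w" "z \<in> cc_hull d n S"
  shows "0 \<le> pair d n z w"
proof -
  have "cc_hull d n S \<subseteq> {z \<in> carrier d n. 0 \<le> pair d n z w}"
    using assms by (intro cc_hull_sub halfspace_cone halfspace_closed) auto
  then show ?thesis using assms(3) by auto
qed

definition lin_cont :: "(elt \<Rightarrow> elt) \<Rightarrow> bool" where
  "lin_cont f \<longleftrightarrow> (\<forall>x y. f (zadd x y) = zadd (f x) (f y)) \<and> (\<forall>r x. f (zscale r x) = zscale r (f x))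
     \<and> (\<forall>s z. cto s z \<longrightarrow> cto (\<lambda>m. f (s m)) (f z))"

lemma cc_hull_map:
  assumes f: "lin_cont f" and S: "S \<subseteq> carrier d n" and K: "cvx_cone K" "seq_closed K"
    and gen: "\<And>s. s \<in> S \<Longrightarrow> f s \<in> K" and z: "z \<in> cc_hull d n S"
  shows "f z \<in> K"
proof -
  let ?P = "{z \<in> carrier d n. f z \<in> K}"
  have f0: "f zzero = zzero" using f unfolding lin_cont_def by (metis zscale_zero)
  have "cvx_cone ?P"
  proof (intro cvx_coneI)
    show "zzero \<in> ?P" using f0 cone_zero[OF K(1)] zzero_carrier by auto
    show "zadd x y \<in> ?P" if "x \<in> ?P" "y \<in> ?P" for x y
      using that f K by (auto simp: lin_cont_def zadd_carrier intro: cone_add)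
    show "zscale r x \<in> ?P" if "x \<in> ?P" "0 \<le> r" for x r
      using that f K by (auto simp: lin_cont_def zscale_carrier intro: cone_scale)
  qed
  moreover have "seq_closed ?P"
  proof (intro seq_closedI)
    fix s z assume a: "\<forall>m. s m \<in> ?P" "cto s z"
    have "z \<in> carrier d n" using a by (intro carrier_closed[of s]) auto
    moreover have "f z \<in> K"
    proof (rule seq_closed_cto[OF K(2)])
      show "\<forall>m. f (s m) \<in> K" using a by auto
      show "cto (\<lambda>m. f (s m)) (f z)" using a(2) f unfolding lin_cont_def by blast
    qed
    ultimately show "z \<in> ?P" by simp
  qed
  ultimately have "cc_hull d n S \<subseteq> ?P" using S gen by (intro cc_hull_sub) auto
  then show ?thesis using z by auto
qed


lemma bipolar_sep:
  assumes K: "K \<subseteq> carrier d n" "cvx_cone K" "seq_closed K" and z: "z \<in> carrier d n" "z \<notin> K"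
  shows "\<exists>w\<in>dual_cone d n K. pair d n z w < 0"
proof -
  have nl: "\<not> (\<exists>s. (\<forall>m. s m \<in> K) \<and> cto s z)" using K z seq_closed_cto by blast
  have ne: "K \<noteq> {}" using cone_zero[OF K(2)] by auto
  obtain w \<delta> where w: "w \<in> carrier d n" "\<delta> > 0" "\<And>y. y \<in> K \<Longrightarrow> pair d n z w + \<delta> \<le> pair d n y w"
    using separation[OF K(1) cone_convex[OF K(2)] ne z(1) nl] by blast
  have neg: "pair d n z w + \<delta> \<le> 0" using w(3)[OF cone_zero[OF K(2)]] by simp
  have "w \<in> dual_cone d n K"
    unfolding dual_cone_def
  proof (intro CollectI conjI ballI w(1))
    fix y assume y: "y \<in> K"
    show "0 \<le> pair d n y w"
    proof (rule ccontr)
      assume "\<not> 0 \<le> pair d n y w"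
      then have c: "pair d n y w < 0" by simp
      define t where "t = (1 + \<bar>pair d n z w + \<delta>\<bar>) / (- pair d n y w)"
      have t: "0 \<le> t" using c unfolding t_def by (intro divide_nonneg_pos) auto
      have "t * pair d n y w = - (1 + \<bar>pair d n z w + \<delta>\<bar>)" using c by (simp add: t_def)
      moreover have "pair d n z w + \<delta> \<le> t * pair d n y w"
        using w(3)[OF cone_scale[OF K(2) y t]] by (simp add: pair_zscale_left)
      ultimately show False by linarith
    qed
  qed
  then show ?thesis using neg w(2) by (intro bexI[of _ w]) auto
qed

lemma bipolar:
  assumes "K \<subseteq> carrier d n" "cvx_cone K" "seq_closed K" "z \<in> carrier d n"
    "\<And>w. w \<in> dual_cone d n K \<Longrightarrow> 0 \<le> pair d n z w"
  shows "z \<in> K"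
  using bipolar_sep[OF assms(1-4)] assms(5) by force

lemma compress_carrier:
  assumes z: "z \<in> carrier d n"
  shows "compress n m V z \<in> carrier d m"
proof (rule carrierI')
  fix k i j assume a: "\<not> (k < d \<and> i < m \<and> j < m)"
  show "compress n m V z k i j = 0"
  proof (cases "i < m \<and> j < m")
    case True
    then have "\<not> k < d" using a by simp
    then show ?thesis using carrier_zero'[OF z] by (simp add: compress_def)
  next
    case False then show ?thesis by (auto simp: compress_def)
  qed
next
  fix k i j
  show "compress n m V z k j i = cnj (compress n m V z k i j)"
  proof (cases "i < m \<and> j < m")
    case True
    have "cnj (compress n m V z k i j) = (\<Sum>p<n. \<Sum>q<n. V p i * z k q p * cnj (V q j))"
      using True by (simp add: compress_def cnj_sum carrier_herm[OF z, symmetric])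
    also have "\<dots> = (\<Sum>q<n. \<Sum>p<n. V p i * z k q p * cnj (V q j))" by (rule sum.swap)
    also have "\<dots> = compress n m V z k j i" using True
      by (simp add: compress_def mult_ac)
    finally show ?thesis by simp
  next
    case False then show ?thesis by (auto simp: compress_def)
  qed
qed

lemma compress_lin_cont: "lin_cont (compress n m V)"
  unfolding lin_cont_def
proof (intro conjI allI impI)
  fix x y show "compress n m V (zadd x y) = zadd (compress n m V x) (compress n m V y)"
    by (auto simp: compress_def zadd_def sum.distrib ring_distribs intro!: ext)
next
  fix r x show "compress n m V (zscale r x) = zscale r (compress n m V x)"
    by (auto simp: compress_def zscale_def sum_distrib_left mult_ac intro!: ext)
next
  fix s z assume "cto s z" then show "cto (\<lambda>mm. compress n m V (s mm)) (compress n m V z)"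
    unfolding cto_def compress_def by (auto intro!: tendsto_intros)
qed

lemma compress_compose:
  "compress n m V (compress p n U z) = compress p m (\<lambda>a b. \<Sum>c<n. U a c * V c b) z"
proof (intro ext)
  fix k i j
  show "compress n m V (compress p n U z) k i j = compress p m (\<lambda>a b. \<Sum>c<n. U a c * V c b) z k i j"
  proof (cases "i < m \<and> j < m")
    case True
    have "compress n m V (compress p n U z) k i j = (\<Sum>c<n. \<Sum>c'<n. \<Sum>a<p. \<Sum>b<p. cnj (V c i) * cnj (U a c) * z k a b * U b c' * V c' j)"
      using True by (simp add: compress_def sum_distrib_left sum_distrib_right mult_ac)
    also have "\<dots> = (\<Sum>c<n. \<Sum>a<p. \<Sum>c'<n. \<Sum>b<p. cnj (V c i) * cnj (U a c) * z k a b * U b c' * V c' j)"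
      by (intro sum.cong refl sum.swap)
    also have "\<dots> = (\<Sum>a<p. \<Sum>c<n. \<Sum>c'<n. \<Sum>b<p. cnj (V c i) * cnj (U a c) * z k a b * U b c' * V c' j)"
      by (rule sum.swap)
    also have "\<dots> = (\<Sum>a<p. \<Sum>c<n. \<Sum>b<p. \<Sum>c'<n. cnj (V c i) * cnj (U a c) * z k a b * U b c' * V c' j)"
      by (intro sum.cong refl sum.swap)
    also have "\<dots> = (\<Sum>a<p. \<Sum>b<p. \<Sum>c<n. \<Sum>c'<n. cnj (V c i) * cnj (U a c) * z k a b * U b c' * V c' j)"
      by (intro sum.cong refl sum.swap)
    also have "\<dots> = compress p m (\<lambda>a b. \<Sum>c<n. U a c * V c b) z k i j"
      using True by (simp add: compress_def sum_distrib_left sum_distrib_right cnj_sum mult_ac)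
    finally show ?thesis .
  next
    case False then show ?thesis by (auto simp: compress_def)
  qed
qed

lemma lin_apply_carrier:
  assumes z: "z \<in> carrier d1 n"
  shows "lin_apply d1 d2 M z \<in> carrier d2 n"
proof (rule carrierI')
  fix k i j assume a: "\<not> (k < d2 \<and> i < n \<and> j < n)"
  show "lin_apply d1 d2 M z k i j = 0"
  proof (cases "k < d2")
    case True
    then have "\<not> (i < n \<and> j < n)" using a by simp
    then show ?thesis using carrier_zero'[OF z] by (simp add: lin_apply_def)
  next
    case False then show ?thesis by (simp add: lin_apply_def)
  qed
next
  fix k i j
  show "lin_apply d1 d2 M z k j i = cnj (lin_apply d1 d2 M z k i j)"
    by (simp add: lin_apply_def cnj_sum carrier_herm[OF z, symmetric])
qed

lemma lin_apply_lin_cont: "lin_cont (lin_apply d1 d2 M)"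
  unfolding lin_cont_def
proof (intro conjI allI impI)
  fix x y show "lin_apply d1 d2 M (zadd x y) = zadd (lin_apply d1 d2 M x) (lin_apply d1 d2 M y)"
    by (auto simp: lin_apply_def zadd_def sum.distrib ring_distribs intro!: ext)
next
  fix r x show "lin_apply d1 d2 M (zscale r x) = zscale r (lin_apply d1 d2 M x)"
    by (auto simp: lin_apply_def zscale_def sum_distrib_left mult_ac intro!: ext)
next
  fix s z assume "cto s z" then show "cto (\<lambda>m. lin_apply d1 d2 M (s m)) (lin_apply d1 d2 M z)"
    unfolding cto_def lin_apply_def by (auto intro!: tendsto_intros)
qed

lemma tau_carrier:
  assumes g: "g \<in> carrier d k" and h: "h \<in> carrier e l"
  shows "tau d e k l g h \<in> carrier (d * e) (k * l)"
proof (rule carrierI')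
  fix c r s assume "\<not> (c < d * e \<and> r < k * l \<and> s < k * l)"
  then show "tau d e k l g h c r s = 0" by (auto simp: tau_def)
next
  fix c r s
  show "tau d e k l g h c s r = cnj (tau d e k l g h c r s)"
    by (simp add: tau_def carrier_herm[OF g, symmetric] carrier_herm[OF h, symmetric])
qed


lemma sum_shift_nat: "sum f {m..<m+(b::nat)} = (\<Sum>j<b. f (m+j))"
proof -
  have "sum f {0 + m..<b + m} = (\<Sum>j\<in>{0..<b}. f (j + m))" by (rule sum.shift_bounds_nat_ivl)
  then show ?thesis by (simp add: add.commute atLeast0LessThan)
qed

lemma sum_split: "(\<Sum>c<(a::nat)*b. f c) = (\<Sum>i<a. \<Sum>j<b. f (i*b+j))"
  by (simp add: sum.nat_group[symmetric] sum_shift_nat)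

lemma dm_div[simp]: "(j::nat) < b \<Longrightarrow> (i*b+j) div b = i" by simp
lemma dm_mod[simp]: "(j::nat) < b \<Longrightarrow> (i*b+j) mod b = j" by simp
lemma dm_less: "(i::nat) < a \<Longrightarrow> j < b \<Longrightarrow> i*b+j < a*b"
proof -
  assume a: "i < a" "j < b"
  have "i*b+j < i*b+b" using a by simp
  also have "\<dots> = Suc i * b" by simp
  also have "\<dots> \<le> a*b" using a by (intro mult_right_mono) auto
  finally show ?thesis .
qed

lemma sum_swap2: "(\<Sum>i\<in>A. \<Sum>r\<in>R. \<Sum>s\<in>S. f i r s) = (\<Sum>r\<in>R. \<Sum>s\<in>S. \<Sum>i\<in>A. f i r s)"
proof -
  have "(\<Sum>i\<in>A. \<Sum>r\<in>R. \<Sum>s\<in>S. f i r s) = (\<Sum>r\<in>R. \<Sum>i\<in>A. \<Sum>s\<in>S. f i r s)" by (rule sum.swap)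
  also have "\<dots> = (\<Sum>r\<in>R. \<Sum>s\<in>S. \<Sum>i\<in>A. f i r s)" by (intro sum.cong refl sum.swap)
  finally show ?thesis .
qed

lemma real_of_herm: "z = cnj z \<Longrightarrow> complex_of_real (Re z) = z"
  by (metis Reals_cnj_iff of_real_Re)

lemma carrier_real1: "l \<in> carrier d 1 \<Longrightarrow> complex_of_real (Re (l c 0 0)) = l c 0 0"
  using carrier_herm[of l d 1 c 0 0] by (intro real_of_herm) simp

definition lmat :: "nat \<Rightarrow> elt \<Rightarrow> nat \<Rightarrow> nat \<Rightarrow> real" where
  "lmat e l = (\<lambda>i j. Re (l (i*e+j) 0 0))"

definition bmap :: "nat \<Rightarrow> nat \<Rightarrow> nat \<Rightarrow> nat \<Rightarrow> elt \<Rightarrow> elt \<Rightarrow> elt \<Rightarrow> elt" where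
  "bmap dx dy dv dw l1 l2 a = lin_apply (dx*dy) (dv*dw) (kron_lin dy dw (lmat dx l1) (lmat dy l2)) a"

definition qel :: "nat \<Rightarrow> nat \<Rightarrow> nat \<Rightarrow> nat \<Rightarrow> elt \<Rightarrow> elt \<Rightarrow> elt" where
  "qel dv dw ni n x b = (\<lambda>k r s. if k = 0 \<and> r < ni*n \<and> s < ni*n then
      (\<Sum>c<dv*dw. x c (r div n) (s div n) * b c (r mod n) (s mod n)) else 0)"

lemma bmap_eval:
  assumes l1: "l1 \<in> carrier (dv*dx) 1" and l2: "l2 \<in> carrier (dw*dy) 1" and kv: "kv < dv" and kw: "kw < dw"
  shows "bmap dx dy dv dw l1 l2 a (kv*dw+kw) i j = (\<Sum>kx<dx. \<Sum>ky<dy. l1 (kv*dx+kx) 0 0 * l2 (kw*dy+ky) 0 0 * a (kx*dy+ky) i j)"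
proof -
  have c: "kv*dw+kw < dv*dw" using kv kw dm_less by auto
  have "bmap dx dy dv dw l1 l2 a (kv*dw+kw) i j = (\<Sum>kx<dx. \<Sum>ky<dy.
      complex_of_real (kron_lin dy dw (lmat dx l1) (lmat dy l2) (kv*dw+kw) (kx*dy+ky)) * a (kx*dy+ky) i j)"
    using c by (simp add: bmap_def lin_apply_def sum_split)
  also have "\<dots> = (\<Sum>kx<dx. \<Sum>ky<dy. l1 (kv*dx+kx) 0 0 * l2 (kw*dy+ky) 0 0 * a (kx*dy+ky) i j)"
    using kw by (intro sum.cong refl) (simp add: kron_lin_def lmat_def carrier_real1[OF l1] carrier_real1[OF l2])
  finally show ?thesis .
qed

lemma inner_T:
  assumes l1: "l1 \<in> carrier (dv*dx) 1" and l2: "l2 \<in> carrier (dw*dy) 1"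
    and r: "r < ni*n" and s: "s < ni*n"
  shows "(\<Sum>c1<dv*dx. \<Sum>c2<dw*dy. l1 c1 0 0 * l2 c2 0 0 * xa_tensor dv dw ni x dx dy n a (c1 * (dw*dy) + c2) r s)
    = qel dv dw ni n x (bmap dx dy dv dw l1 l2 a) 0 r s"
proof -
  have "(\<Sum>c1<dv*dx. \<Sum>c2<dw*dy. l1 c1 0 0 * l2 c2 0 0 * xa_tensor dv dw ni x dx dy n a (c1 * (dw*dy) + c2) r s)
      = (\<Sum>kv<dv. \<Sum>kx<dx. \<Sum>kw<dw. \<Sum>ky<dy. l1 (kv*dx+kx) 0 0 * l2 (kw*dy+ky) 0 0 *
           (x (kv*dw+kw) (r div n) (s div n) * a (kx*dy+ky) (r mod n) (s mod n)))"
    unfolding sum_split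
  proof (intro sum.cong refl)
    fix kv kx kw ky assume a: "kv \<in> {..<dv}" "kx \<in> {..<dx}" "kw \<in> {..<dw}" "ky \<in> {..<dy}"
    have c1: "kv*dx+kx < dv*dx" and c2: "kw*dy+ky < dw*dy" using a dm_less by auto
    have c: "(kv*dx+kx) * (dw*dy) + (kw*dy+ky) < (dv*dx)*(dw*dy)" using dm_less[OF c1 c2] .
    show "l1 (kv*dx+kx) 0 0 * l2 (kw*dy+ky) 0 0 * xa_tensor dv dw ni x dx dy n a ((kv*dx+kx) * (dw*dy) + (kw*dy+ky)) r s
       = l1 (kv*dx+kx) 0 0 * l2 (kw*dy+ky) 0 0 * (x (kv*dw+kw) (r div n) (s div n) * a (kx*dy+ky) (r mod n) (s mod n))"
      using a c c2 r s by (simp add: xa_tensor_def Let_def)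
  qed
  also have "\<dots> = (\<Sum>kv<dv. \<Sum>kw<dw. \<Sum>kx<dx. \<Sum>ky<dy. l1 (kv*dx+kx) 0 0 * l2 (kw*dy+ky) 0 0 *
           (x (kv*dw+kw) (r div n) (s div n) * a (kx*dy+ky) (r mod n) (s mod n)))"
    by (intro sum.cong refl sum.swap)
  also have "\<dots> = (\<Sum>kv<dv. \<Sum>kw<dw. x (kv*dw+kw) (r div n) (s div n) * bmap dx dy dv dw l1 l2 a (kv*dw+kw) (r mod n) (s mod n))"
    by (intro sum.cong refl) (simp add: bmap_eval[OF l1 l2] sum_distrib_left mult_ac)
  also have "\<dots> = qel dv dw ni n x (bmap dx dy dv dw l1 l2 a) 0 r s"
    using r s by (simp add: qel_def sum_split)
  finally show ?thesis .
qed


lemma trip_T: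
  assumes l1: "l1 \<in> carrier (dv*dx) 1" and l2: "l2 \<in> carrier (dw*dy) 1"
  shows "trip_eval (dv*dx) (dw*dy) (ni*n) l1 l2 l3 (xa_tensor dv dw ni x dx dy n a)
     = pair 1 (ni*n) (qel dv dw ni n x (bmap dx dy dv dw l1 l2 a)) l3"
proof -
  let ?X = "xa_tensor dv dw ni x dx dy n a"
  let ?N = "ni*n"
  have "(\<Sum>c1<dv*dx. \<Sum>c2<dw*dy. \<Sum>r<?N. \<Sum>s<?N. l1 c1 0 0 * l2 c2 0 0 * l3 0 r s * ?X (c1 * (dw*dy) + c2) r s)
     = (\<Sum>c1<dv*dx. \<Sum>c2<dw*dy. \<Sum>r<?N. \<Sum>s<?N. l3 0 r s * (l1 c1 0 0 * l2 c2 0 0 * ?X (c1 * (dw*dy) + c2) r s))"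
    by (simp add: mult_ac)
  also have "\<dots> = (\<Sum>c1<dv*dx. \<Sum>r<?N. \<Sum>s<?N. \<Sum>c2<dw*dy. l3 0 r s * (l1 c1 0 0 * l2 c2 0 0 * ?X (c1 * (dw*dy) + c2) r s))"
    by (rule sum.cong[OF refl], rule sum_swap2)
  also have "\<dots> = (\<Sum>r<?N. \<Sum>s<?N. \<Sum>c1<dv*dx. \<Sum>c2<dw*dy. l3 0 r s * (l1 c1 0 0 * l2 c2 0 0 * ?X (c1 * (dw*dy) + c2) r s))"
    by (rule sum_swap2)
  also have "\<dots> = (\<Sum>r<?N. \<Sum>s<?N. l3 0 r s * (\<Sum>c1<dv*dx. \<Sum>c2<dw*dy. l1 c1 0 0 * l2 c2 0 0 * ?X (c1 * (dw*dy) + c2) r s))"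
    by (simp add: sum_distrib_left)
  also have "\<dots> = (\<Sum>r<?N. \<Sum>s<?N. l3 0 r s * qel dv dw ni n x (bmap dx dy dv dw l1 l2 a) 0 r s)"
    by (intro sum.cong refl) (simp add: inner_T[OF l1 l2])
  finally show ?thesis by (simp add: trip_eval_def pair_def mult_ac)
qed

lemma qel_carrier:
  assumes x: "x \<in> carrier (dv*dw) ni" and b: "b \<in> carrier (dv*dw) n"
  shows "qel dv dw ni n x b \<in> carrier 1 (ni*n)"
proof (rule carrierI')
  fix k r s :: nat assume "\<not> (k < 1 \<and> r < ni * n \<and> s < ni * n)"
  then show "qel dv dw ni n x b k r s = 0" by (auto simp: qel_def)
next
  fix k r s :: nat
  show "qel dv dw ni n x b k s r = cnj (qel dv dw ni n x b k r s)"
    by (auto simp: qel_def cnj_sum carrier_herm[OF x, symmetric] carrier_herm[OF b, symmetric])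
qed

lemma qel_psd:
  assumes x: "x \<in> carrier (dv*dw) ni" and b: "b \<in> carrier (dv*dw) n"
    and pos: "\<And>V. 0 \<le> pair (dv*dw) ni (compress n ni V b) x"
  shows "qel dv dw ni n x b \<in> psd (ni*n)"
  unfolding psd_def
proof (intro CollectI conjI allI qel_carrier[OF x b])
  fix v :: "nat \<Rightarrow> complex"
  define V where "V p r1 = v (r1*n+p)" for p r1
  let ?q = "qel dv dw ni n x b"
  have "(\<Sum>r<ni*n. \<Sum>s<ni*n. cnj (v r) * ?q 0 r s * v s)
     = (\<Sum>r1<ni. \<Sum>r2<n. \<Sum>s1<ni. \<Sum>s2<n. \<Sum>c<dv*dw. cnj (v (r1*n+r2)) * (x c r1 s1 * b c r2 s2) * v (s1*n+s2))"
    unfolding sum_split[where a=ni and b=n]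
    by (intro sum.cong refl) (simp add: qel_def dm_less sum_distrib_left sum_distrib_right)
  also have "\<dots> = (\<Sum>r1<ni. \<Sum>s1<ni. \<Sum>r2<n. \<Sum>s2<n. \<Sum>c<dv*dw. cnj (v (r1*n+r2)) * (x c r1 s1 * b c r2 s2) * v (s1*n+s2))"
    by (rule sum.cong[OF refl], rule sum.swap)
  also have "\<dots> = (\<Sum>r1<ni. \<Sum>s1<ni. \<Sum>c<dv*dw. \<Sum>r2<n. \<Sum>s2<n. cnj (v (r1*n+r2)) * (x c r1 s1 * b c r2 s2) * v (s1*n+s2))"
    by (rule sum.cong[OF refl], rule sum.cong[OF refl], rule sum_swap2[symmetric])
  also have "\<dots> = (\<Sum>c<dv*dw. \<Sum>r1<ni. \<Sum>s1<ni. \<Sum>r2<n. \<Sum>s2<n. cnj (v (r1*n+r2)) * (x c r1 s1 * b c r2 s2) * v (s1*n+s2))"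
    by (rule sum_swap2[symmetric])
  also have "\<dots> = (\<Sum>c<dv*dw. \<Sum>r1<ni. \<Sum>s1<ni. (\<Sum>p<n. \<Sum>q<n. cnj (V p r1) * b c p q * V q s1) * x c r1 s1)"
    by (intro sum.cong refl) (simp add: V_def sum_distrib_left sum_distrib_right mult_ac)
  finally have "Re (\<Sum>r<ni*n. \<Sum>s<ni*n. cnj (v r) * ?q 0 r s * v s) = pair (dv*dw) ni (compress n ni V b) x"
    by (simp add: pair_def compress_def)
  then show "0 \<le> Re (\<Sum>i<ni*n. \<Sum>j<ni*n. cnj (v i) * ?q 0 i j * v j)" using pos by simp
qed


definition mgen :: "nat \<Rightarrow> osys \<Rightarrow> nat \<Rightarrow> osys \<Rightarrow> nat \<Rightarrow> elt set" where
  "mgen d G e H n = {compress (k * l) n V (tau d e k l g h) | k l g h V. 1 \<le> k \<and> 1 \<le> l \<and> g \<in> G k \<and> h \<in> H l}"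

lemma min_tp_mgen: "min_tp d G e H n = cc_hull (d*e) n (mgen d G e H n)"
  by (simp add: min_tp_def mgen_def)

lemma mgen_carrier:
  assumes "\<And>k. 1 \<le> k \<Longrightarrow> G k \<subseteq> carrier d k" "\<And>l. 1 \<le> l \<Longrightarrow> H l \<subseteq> carrier e l"
  shows "mgen d G e H n \<subseteq> carrier (d*e) n"
  using assms unfolding mgen_def by (auto intro!: compress_carrier tau_carrier)

lemma mgen_in: "1 \<le> k \<Longrightarrow> 1 \<le> l \<Longrightarrow> g \<in> G k \<Longrightarrow> h \<in> H l \<Longrightarrow> compress (k * l) n V (tau d e k l g h) \<in> min_tp d G e H n"
  unfolding min_tp_mgen using cc_hull_gen[of "mgen d G e H n"] unfolding mgen_def by blast

definition ment :: "nat \<Rightarrow> nat \<Rightarrow> nat \<Rightarrow> complex" where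
  "ment k = (\<lambda>p q. if p div k = p mod k then 1 else 0)"

lemma sum_delta_nat: "(i::nat) < k \<Longrightarrow> (\<Sum>j<k. if i = j then f j else 0) = f i" by (simp add: sum.delta)
lemma delta2: "(\<Sum>j1<(k::nat). \<Sum>j2<k. if j1 = j2 then f j1 j2 else 0) = (\<Sum>j<k. f j j)"
  by (intro sum.cong refl) (simp add: sum_delta_nat)
lemma delta4: "(\<Sum>i1<(k::nat). \<Sum>i2<k. \<Sum>j1<k. \<Sum>j2<k. (if i1 = i2 then (if j1 = j2 then f i1 i2 j1 j2 else 0) else 0)) = (\<Sum>i<k. \<Sum>j<k. f i i j j)"
proof -
  have "(\<Sum>i1<(k::nat). \<Sum>i2<k. \<Sum>j1<k. \<Sum>j2<k. (if i1 = i2 then (if j1 = j2 then f i1 i2 j1 j2 else 0) else 0))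
     = (\<Sum>i1<(k::nat). \<Sum>i2<k. if i1 = i2 then (\<Sum>j1<k. \<Sum>j2<k. (if j1 = j2 then f i1 i2 j1 j2 else 0)) else 0)"
    by (intro sum.cong refl) auto
  also have "\<dots> = (\<Sum>i<k. \<Sum>j1<k. \<Sum>j2<k. (if j1 = j2 then f i i j1 j2 else 0))"
    by (rule sum.cong[OF refl]) (simp add: sum_delta_nat)
  also have "\<dots> = (\<Sum>i<k. \<Sum>j<k. f i i j j)"
    by (rule sum.cong[OF refl], rule delta2)
  finally show ?thesis .
qed

lemma ment_compress:
  "compress (k*k) 1 (ment k) z c 0 0 = (\<Sum>i<k. \<Sum>j<k. z c (i*k+i) (j*k+j))"
proof -
  have "compress (k*k) 1 (ment k) z c 0 0 = (\<Sum>i1<k. \<Sum>i2<k. \<Sum>j1<k. \<Sum>j2<k.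
      (if i1 = i2 then (if j1 = j2 then z c (i1*k+i2) (j1*k+j2) else 0) else 0))"
  proof -
    have "compress (k*k) 1 (ment k) z c 0 0 = (\<Sum>i1<k. \<Sum>i2<k. \<Sum>j1<k. \<Sum>j2<k.
      cnj (ment k (i1*k+i2) 0) * z c (i1*k+i2) (j1*k+j2) * ment k (j1*k+j2) 0)"
      by (simp add: compress_def sum_split)
    also have "\<dots> = (\<Sum>i1<k. \<Sum>i2<k. \<Sum>j1<k. \<Sum>j2<k.
      (if i1 = i2 then (if j1 = j2 then z c (i1*k+i2) (j1*k+j2) else 0) else 0))"
      by (intro sum.cong refl) (simp add: ment_def)
    finally show ?thesis .
  qed
  also have "\<dots> = (\<Sum>i<k. \<Sum>j<k. z c (i*k+i) (j*k+j))"
    by (rule delta4)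
  finally show ?thesis .
qed


lemma ment_compress': "compress (k*k) (Suc 0) (ment k) z c 0 0 = (\<Sum>i<k. \<Sum>j<k. z c (i*k+i) (j*k+j))"
  using ment_compress[of k z c] by simp

lemma lin_apply_in: "k < d2 \<Longrightarrow> lin_apply d1 d2 M z k i j = (\<Sum>l<d1. complex_of_real (M k l) * z l i j)"
  by (simp add: lin_apply_def)

lemma el_dual:
  assumes l1: "l1 \<in> dual_cone (d1*d2) 1 (min_tp d1 A d2 B 1)" and k: "1 \<le> k"
    and a: "a \<in> A k" and b: "b \<in> B k"
  shows "0 \<le> pair d1 k a (lin_apply d2 d1 (lmat d2 l1) b)"
proof -
  have l1C: "l1 \<in> carrier (d1*d2) 1" using l1 dual_cone_carrier by blast
  have gen: "compress (k*k) 1 (ment k) (tau d1 d2 k k a b) \<in> min_tp d1 A d2 B 1"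
    using mgen_in[where k=k and l=k and g=a and h=b and G=A and H=B and d=d1 and e=d2 and n=1 and V="ment k"] k a b by blast
  then have pos: "0 \<le> pair (d1*d2) 1 (compress (k*k) 1 (ment k) (tau d1 d2 k k a b)) l1"
    using l1 unfolding dual_cone_def by blast
  have ik: "i*k+i < k*k" if "i < k" for i using dm_less[OF that that] .
  have "pair (d1*d2) 1 (compress (k*k) 1 (ment k) (tau d1 d2 k k a b)) l1
      = Re (\<Sum>c1<d1. \<Sum>c2<d2. (\<Sum>i<k. \<Sum>j<k. tau d1 d2 k k a b (c1*d2+c2) (i*k+i) (j*k+j)) * l1 (c1*d2+c2) 0 0)"
    by (simp add: pair_def ment_compress' sum_split)
  also have "\<dots> = Re (\<Sum>c1<d1. \<Sum>c2<d2. \<Sum>i<k. \<Sum>j<k. a c1 i j * l1 (c1*d2+c2) 0 0 * b c2 i j)"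
    by (intro arg_cong[where f=Re] sum.cong refl) (simp add: tau_def dm_less ik sum_distrib_left sum_distrib_right mult_ac)
  also have "\<dots> = Re (\<Sum>c1<d1. \<Sum>i<k. \<Sum>j<k. \<Sum>c2<d2. a c1 i j * l1 (c1*d2+c2) 0 0 * b c2 i j)"
    by (intro arg_cong[where f=Re], rule sum.cong[OF refl], rule sum_swap2)
  also have "\<dots> = pair d1 k a (lin_apply d2 d1 (lmat d2 l1) b)"
    by (simp add: pair_def lin_apply_in lmat_def carrier_real1[OF l1C] sum_distrib_left mult_ac)
  finally show ?thesis using pos by simp
qed

definition idl :: "nat \<Rightarrow> elt" where
  "idl d = (\<lambda>c i j. if i = 0 \<and> j = 0 \<and> c < d*d \<and> c div d = c mod d then 1 else 0)"

lemma idl_carrier: "idl d \<in> carrier (d*d) 1"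
  by (rule carrierI') (auto simp: idl_def)

lemma idl_val: "a < d \<Longrightarrow> b < d \<Longrightarrow> idl d (a*d+b) 0 0 = (if a = b then 1 else 0)"
  by (simp add: idl_def dm_less)

lemma pair_gen_idl:
  "pair (d*d) 1 (compress (k*l) 1 V (tau d d k l q g)) (idl d) = pair d k (compress l k (\<lambda>p2 p1. V (p1*l+p2) 0) g) q"
proof -
  have "pair (d*d) 1 (compress (k*l) 1 V (tau d d k l q g)) (idl d)
     = Re (\<Sum>a<d. \<Sum>b<d. compress (k*l) 1 V (tau d d k l q g) (a*d+b) 0 0 * (if a = b then 1 else 0))"
    by (simp add: pair_def sum_split idl_val)
  also have "\<dots> = Re (\<Sum>a<d. compress (k*l) 1 V (tau d d k l q g) (a*d+a) 0 0)"
  proof -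
    have "\<And>a. a < d \<Longrightarrow> (\<Sum>b<d. compress (k*l) 1 V (tau d d k l q g) (a*d+b) 0 0 * (if a = b then 1 else 0))
        = compress (k*l) 1 V (tau d d k l q g) (a*d+a) 0 0"
      by (simp add: if_distrib sum_delta_nat cong: if_cong)
    then show ?thesis by (intro arg_cong[where f=Re] sum.cong refl) auto
  qed
  also have "\<dots> = Re (\<Sum>a<d. \<Sum>p1<k. \<Sum>p2<l. \<Sum>p1'<k. \<Sum>p2'<l. cnj (V (p1*l+p2) 0) * q a p1 p1' * g a p2 p2' * V (p1'*l+p2') 0)"
    by (intro arg_cong[where f=Re] sum.cong refl) (simp add: compress_def sum_split tau_def dm_less mult_ac)
  also have "\<dots> = Re (\<Sum>a<d. \<Sum>p1<k. \<Sum>p1'<k. \<Sum>p2<l. \<Sum>p2'<l. cnj (V (p1*l+p2) 0) * q a p1 p1' * g a p2 p2' * V (p1'*l+p2') 0)"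
    by (intro arg_cong[where f=Re], rule sum.cong[OF refl], rule sum.cong[OF refl], rule sum.swap)
  also have "\<dots> = pair d k (compress l k (\<lambda>p2 p1. V (p1*l+p2) 0) g) q"
    by (simp add: pair_def compress_def sum_distrib_left sum_distrib_right mult_ac)
  finally show ?thesis .
qed


lemma aos_carrier: "aos d G \<Longrightarrow> 1 \<le> n \<Longrightarrow> G n \<subseteq> carrier d n"
  unfolding aos_def by blast
lemma aos_cone: "aos d G \<Longrightarrow> 1 \<le> n \<Longrightarrow> cvx_cone (G n)"
  unfolding aos_def by blast
lemma aos_closed: "aos d G \<Longrightarrow> 1 \<le> n \<Longrightarrow> seq_closed (G n)"
  unfolding aos_def by blast
lemma aos_compress: "aos d G \<Longrightarrow> 1 \<le> n \<Longrightarrow> 1 \<le> m \<Longrightarrow> z \<in> G n \<Longrightarrow> compress n m V z \<in> G m"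
  unfolding aos_def by blast
lemma aos_proper: "aos d G \<Longrightarrow> proper_cone d (G 1)"
  unfolding aos_def by blast

lemma dual_sys_carrier: "dual_sys d G k \<subseteq> carrier d k"
  by (simp add: dual_sys_def dual_cone_carrier)

lemma idl_dual:
  assumes G: "aos d G"
  shows "idl d \<in> dual_cone (d*d) 1 (min_tp d (dual_sys d G) d G 1)"
  unfolding dual_cone_def
proof (intro CollectI conjI ballI idl_carrier)
  fix z assume z: "z \<in> min_tp d (dual_sys d G) d G 1"
  have Gc: "\<And>k. 1 \<le> k \<Longrightarrow> G k \<subseteq> carrier d k" using G aos_carrier by blast
  show "0 \<le> pair (d*d) 1 z (idl d)"
  proof (rule cc_hull_halfspace[of "mgen d (dual_sys d G) d G 1"])
    show "mgen d (dual_sys d G) d G 1 \<subseteq> carrier (d*d) 1" by (rule mgen_carrier[OF dual_sys_carrier Gc])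
    show "z \<in> cc_hull (d*d) 1 (mgen d (dual_sys d G) d G 1)" using z min_tp_mgen by metis
  next
    fix s assume "s \<in> mgen d (dual_sys d G) d G 1"
    then obtain k l q g V where s: "s = compress (k*l) 1 V (tau d d k l q g)" "1 \<le> k" "1 \<le> l"
      "q \<in> dual_sys d G k" "g \<in> G l" unfolding mgen_def by blast
    have "compress l k (\<lambda>p2 p1. V (p1*l+p2) 0) g \<in> G k" using G s by (intro aos_compress) auto
    then have "0 \<le> pair d k (compress l k (\<lambda>p2 p1. V (p1*l+p2) 0) g) q" using s(4)
      by (simp add: dual_sys_def dual_cone_def)
    then show "0 \<le> pair (d*d) 1 s (idl d)" using s pair_gen_idl by simp
  qed
qed

definition idl3 :: "nat \<Rightarrow> elt" where
  "idl3 n = (\<lambda>k r s. if k = 0 \<and> r < n*n \<and> s < n*n \<and> r div n = r mod n \<and> s div n = s mod n then 1 else 0)"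

lemma delta_pair:
  assumes "(a::nat) < A" "(b::nat) < B"
  shows "(\<Sum>i<A. \<Sum>j<B. if a = i then (if b = j then f i j else 0) else 0) = f a b"
proof -
  have "(\<Sum>i<A. \<Sum>j<B. if a = i then (if b = j then f i j else 0) else 0)
     = (\<Sum>i<A. if a = i then (\<Sum>j<B. if b = j then f i j else 0) else 0)"
    by (rule sum.cong[OF refl]) auto
  also have "\<dots> = (\<Sum>j<B. if b = j then f a j else 0)" using assms by (simp add: sum_delta_nat)
  also have "\<dots> = f a b" using assms by (simp add: sum_delta_nat)
  finally show ?thesis .
qed

lemma pair1: "pair 1 m z w = Re (\<Sum>i<m. \<Sum>j<m. z 0 i j * w 0 i j)"
  by (simp add: pair_def)

lemma idl3_val: "i1 < n \<Longrightarrow> i2 < n \<Longrightarrow> j1 < n \<Longrightarrow> j2 < n \<Longrightarrow>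
   P * idl3 n 0 (i1*n+i2) (j1*n+j2) = (if i1 = i2 then (if j1 = j2 then P else 0) else 0)"
  by (simp add: idl3_def dm_less)

lemma bmap_idl:
  assumes a: "a \<in> carrier (dx*dy) n"
  shows "bmap dx dy dx dy (idl dx) (idl dy) a = a"
proof (rule carrier_eqI[OF _ a])
  show "bmap dx dy dx dy (idl dx) (idl dy) a \<in> carrier (dx*dy) n"
    unfolding bmap_def by (rule lin_apply_carrier[OF a])
next
  fix c i j assume c: "c < dx*dy" "i < n" "j < n"
  define kv kw where "kv = c div dy" and "kw = c mod dy"
  have cc: "c = kv*dy+kw" by (simp add: kv_def kw_def)
  have kv: "kv < dx" using c(1) by (simp add: kv_def less_mult_imp_div_less)
  have kw: "kw < dy" using c(1) by (simp add: kw_def) (metis mod_less_divisor mult_zero_right neq0_conv not_less0)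
  have "bmap dx dy dx dy (idl dx) (idl dy) a (kv*dy+kw) i j
      = (\<Sum>kx<dx. \<Sum>ky<dy. idl dx (kv*dx+kx) 0 0 * idl dy (kw*dy+ky) 0 0 * a (kx*dy+ky) i j)"
    by (rule bmap_eval[OF idl_carrier idl_carrier kv kw])
  also have "\<dots> = (\<Sum>kx<dx. \<Sum>ky<dy. if kv = kx then (if kw = ky then a (kx*dy+ky) i j else 0) else 0)"
    using kv kw by (intro sum.cong refl) (auto simp: idl_val)
  also have "\<dots> = a (kv*dy+kw) i j" using delta_pair[OF kv kw] .
  finally show "bmap dx dy dx dy (idl dx) (idl dy) a c i j = a c i j" using cc by simp
qed


lemma idl3_carrier: "idl3 n \<in> carrier 1 (n*n)"
  by (rule carrierI') (auto simp: idl3_def)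

lemma pair_idl3: "pair 1 (n*n) P (idl3 n) = Re (\<Sum>i<n. \<Sum>j<n. P 0 (i*n+i) (j*n+j))"
proof -
  have "pair 1 (n*n) P (idl3 n) = Re (\<Sum>i1<n. \<Sum>i2<n. \<Sum>j1<n. \<Sum>j2<n.
      (if i1 = i2 then (if j1 = j2 then P 0 (i1*n+i2) (j1*n+j2) else 0) else 0))"
    unfolding pair1 sum_split
    by (intro arg_cong[where f=Re] sum.cong refl) (simp add: idl3_val)
  also have "\<dots> = Re (\<Sum>i<n. \<Sum>j<n. P 0 (i*n+i) (j*n+j))" by (simp only: delta4)
  finally show ?thesis .
qed


lemma idl3_dual: "idl3 n \<in> dual_cone 1 (n*n) (psd (n*n))"
  unfolding dual_cone_def
proof (intro CollectI conjI ballI idl3_carrier)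
  fix P assume P: "P \<in> psd (n*n)"
  then have "\<forall>v. 0 \<le> Re (\<Sum>r<n*n. \<Sum>s<n*n. cnj (v r) * P 0 r s * v s)"
    unfolding psd_def by blast
  then have "0 \<le> Re (\<Sum>r<n*n. \<Sum>s<n*n. cnj (ment n r 0) * P 0 r s * ment n s 0)"
    by (rule allE[where x="\<lambda>r. ment n r 0"]) simp
  also have "(\<Sum>r<n*n. \<Sum>s<n*n. cnj (ment n r 0) * P 0 r s * ment n s 0) = compress (n*n) 1 (ment n) P 0 0 0"
    by (simp add: compress_def)
  also have "\<dots> = (\<Sum>i<n. \<Sum>j<n. P 0 (i*n+i) (j*n+j))" by (rule ment_compress)
  finally have "0 \<le> Re (\<Sum>i<n. \<Sum>j<n. P 0 (i*n+i) (j*n+j))" .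
  then show "0 \<le> pair 1 (n*n) P (idl3 n)" by (simp only: pair_idl3)
qed

lemma fail_pair: "pair 1 (n*n) (qel dx dy n n w a) (idl3 n) = pair (dx*dy) n a w"
proof -
  have ii: "i*n+i < n*n" if "i < n" for i using dm_less[OF that that] .
  have "pair 1 (n*n) (qel dx dy n n w a) (idl3 n) = Re (\<Sum>i<n. \<Sum>j<n. \<Sum>c<dx*dy. w c i j * a c i j)"
    unfolding pair_idl3 by (intro arg_cong[where f=Re] sum.cong refl) (simp add: qel_def ii)
  also have "\<dots> = Re (\<Sum>c<dx*dy. \<Sum>i<n. \<Sum>j<n. w c i j * a c i j)"
    by (rule arg_cong[where f=Re], rule sum_swap2[symmetric])
  also have "\<dots> = pair (dx*dy) n a w" by (simp add: pair_def mult.commute)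
  finally show ?thesis .
qed

lemma gen_map:
  "lin_apply (dx*dy) (dv*dw) (kron_lin dy dw M1 M2) (compress (k*l) n V (tau dx dy k l g h))
   = compress (k*l) n V (tau dv dw k l (lin_apply dx dv M1 g) (lin_apply dy dw M2 h))"
proof (intro ext)
  fix c i j
  show "lin_apply (dx*dy) (dv*dw) (kron_lin dy dw M1 M2) (compress (k*l) n V (tau dx dy k l g h)) c i j
   = compress (k*l) n V (tau dv dw k l (lin_apply dx dv M1 g) (lin_apply dy dw M2 h)) c i j"
  proof (cases "c < dv*dw \<and> i < n \<and> j < n")
    case True
    then have c: "c < dv*dw" and ij: "i < n" "j < n" by auto
    have cv: "c div dw < dv" using c by (simp add: less_mult_imp_div_less)
    have cw: "c mod dw < dw" using c by (metis mod_less_divisor mult_zero_right neq0_conv not_less0)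
    have tau': "tau dv dw k l (lin_apply dx dv M1 g) (lin_apply dy dw M2 h) c p q
       = (\<Sum>a<dx. \<Sum>b<dy. complex_of_real (M1 (c div dw) a) * g a (p div l) (q div l) * (complex_of_real (M2 (c mod dw) b) * h b (p mod l) (q mod l)))"
      if "p < k*l" "q < k*l" for p q
      using c cv cw that by (simp add: tau_def lin_apply_def sum_product)
    have tauc: "tau dx dy k l g h (a*dy+b) p q = g a (p div l) (q div l) * h b (p mod l) (q mod l)"
      if "a < dx" "b < dy" "p < k*l" "q < k*l" for a b p q
      using that by (simp add: tau_def dm_less)
    have "lin_apply (dx*dy) (dv*dw) (kron_lin dy dw M1 M2) (compress (k*l) n V (tau dx dy k l g h)) c i j
      = (\<Sum>a<dx. \<Sum>b<dy. \<Sum>p<k*l. \<Sum>q<k*l. complex_of_real (M1 (c div dw) a * M2 (c mod dw) b) *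
           (cnj (V p i) * tau dx dy k l g h (a*dy+b) p q * V q j))"
      using c ij by (simp add: lin_apply_def sum_split kron_lin_def compress_def sum_distrib_left)
    also have "\<dots> = (\<Sum>a<dx. \<Sum>b<dy. \<Sum>p<k*l. \<Sum>q<k*l. complex_of_real (M1 (c div dw) a * M2 (c mod dw) b) *
           (cnj (V p i) * (g a (p div l) (q div l) * h b (p mod l) (q mod l)) * V q j))"
      by (intro sum.cong refl) (simp add: tauc)
    also have "\<dots> = (\<Sum>a<dx. \<Sum>p<k*l. \<Sum>q<k*l. \<Sum>b<dy. complex_of_real (M1 (c div dw) a * M2 (c mod dw) b) *
           (cnj (V p i) * (g a (p div l) (q div l) * h b (p mod l) (q mod l)) * V q j))"
      by (rule sum.cong[OF refl], rule sum_swap2)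
    also have "\<dots> = (\<Sum>p<k*l. \<Sum>q<k*l. \<Sum>a<dx. \<Sum>b<dy. complex_of_real (M1 (c div dw) a * M2 (c mod dw) b) *
           (cnj (V p i) * (g a (p div l) (q div l) * h b (p mod l) (q mod l)) * V q j))"
      by (rule sum_swap2)
    also have "\<dots> = (\<Sum>p<k*l. \<Sum>q<k*l. cnj (V p i) * tau dv dw k l (lin_apply dx dv M1 g) (lin_apply dy dw M2 h) c p q * V q j)"
      by (intro sum.cong refl) (simp add: tau' sum_distrib_left sum_distrib_right mult_ac)
    also have "\<dots> = compress (k*l) n V (tau dv dw k l (lin_apply dx dv M1 g) (lin_apply dy dw M2 h)) c i j"
      using ij by (simp add: compress_def)
    finally show ?thesis .
  next
    case False then show ?thesis by (auto simp: lin_apply_def compress_def tau_def)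
  qed
qed


lemma min_tp_carrier:
  assumes Gc: "\<And>k. 1 \<le> k \<Longrightarrow> G k \<subseteq> carrier d k" and Hc: "\<And>l. 1 \<le> l \<Longrightarrow> H l \<subseteq> carrier e l"
  shows "min_tp d G e H n \<subseteq> carrier (d*e) n"
  by (simp add: min_tp_mgen cc_hull_carrier mgen_carrier[OF Gc Hc])

lemma min_tp_cone:
  assumes Gc: "\<And>k. 1 \<le> k \<Longrightarrow> G k \<subseteq> carrier d k" and Hc: "\<And>l. 1 \<le> l \<Longrightarrow> H l \<subseteq> carrier e l"
  shows "cvx_cone (min_tp d G e H n)"
  by (simp add: min_tp_mgen cc_hull_cone mgen_carrier[OF Gc Hc])

lemma min_tp_closed: "seq_closed (min_tp d G e H n)"
  by (simp add: min_tp_mgen cc_hull_closed)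

lemma min_tp_map:
  assumes Gc: "\<And>k. 1 \<le> k \<Longrightarrow> G k \<subseteq> carrier dx k" and Hc: "\<And>l. 1 \<le> l \<Longrightarrow> H l \<subseteq> carrier dy l"
    and G'c: "\<And>k. 1 \<le> k \<Longrightarrow> G' k \<subseteq> carrier dv k" and H'c: "\<And>l. 1 \<le> l \<Longrightarrow> H' l \<subseteq> carrier dw l"
    and mG: "\<And>k g. 1 \<le> k \<Longrightarrow> g \<in> G k \<Longrightarrow> lin_apply dx dv M1 g \<in> G' k"
    and mH: "\<And>k h. 1 \<le> k \<Longrightarrow> h \<in> H k \<Longrightarrow> lin_apply dy dw M2 h \<in> H' k"
    and z: "z \<in> min_tp dx G dy H n"
  shows "lin_apply (dx*dy) (dv*dw) (kron_lin dy dw M1 M2) z \<in> min_tp dv G' dw H' n"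
proof (rule cc_hull_map[OF lin_apply_lin_cont mgen_carrier[OF Gc Hc]])
  show "cvx_cone (min_tp dv G' dw H' n)" by (rule min_tp_cone[OF G'c H'c])
  show "seq_closed (min_tp dv G' dw H' n)" by (rule min_tp_closed)
  show "z \<in> cc_hull (dx*dy) n (mgen dx G dy H n)" using z min_tp_mgen by metis
next
  fix s assume "s \<in> mgen dx G dy H n"
  then obtain k l g h V where s: "s = compress (k*l) n V (tau dx dy k l g h)" "1 \<le> k" "1 \<le> l"
    "g \<in> G k" "h \<in> H l" unfolding mgen_def by blast
  show "lin_apply (dx*dy) (dv*dw) (kron_lin dy dw M1 M2) s \<in> min_tp dv G' dw H' n"
    unfolding s(1) gen_map using s mG mH by (intro mgen_in) auto
qed

lemma min_tp_compress:
  assumes Gc: "\<And>k. 1 \<le> k \<Longrightarrow> G k \<subseteq> carrier d k" and Hc: "\<And>l. 1 \<le> l \<Longrightarrow> H l \<subseteq> carrier e l"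
    and z: "z \<in> min_tp d G e H n"
  shows "compress n m V z \<in> min_tp d G e H m"
proof (rule cc_hull_map[OF compress_lin_cont mgen_carrier[OF Gc Hc]])
  show "cvx_cone (min_tp d G e H m)" by (rule min_tp_cone[OF Gc Hc])
  show "seq_closed (min_tp d G e H m)" by (rule min_tp_closed)
  show "z \<in> cc_hull (d*e) n (mgen d G e H n)" using z min_tp_mgen by metis
next
  fix s assume "s \<in> mgen d G e H n"
  then obtain k l g h U where s: "s = compress (k*l) n U (tau d e k l g h)" "1 \<le> k" "1 \<le> l"
    "g \<in> G k" "h \<in> H l" unfolding mgen_def by blast
  show "compress n m V s \<in> min_tp d G e H m"
    unfolding s(1) compress_compose using s by (intro mgen_in) auto
qed

lemma xa_carrier:
  assumes x: "x \<in> carrier (dv*dw) ni" and a: "a \<in> carrier (dx*dy) n"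
  shows "xa_tensor dv dw ni x dx dy n a \<in> carrier ((dv*dx)*(dw*dy)) (ni*n)"
proof (rule carrierI')
  fix c r s :: nat assume "\<not> (c < dv * dx * (dw * dy) \<and> r < ni * n \<and> s < ni * n)"
  then show "xa_tensor dv dw ni x dx dy n a c r s = 0" by (auto simp: xa_tensor_def)
next
  fix c r s :: nat
  show "xa_tensor dv dw ni x dx dy n a c s r = cnj (xa_tensor dv dw ni x dx dy n a c r s)"
    by (auto simp: xa_tensor_def Let_def carrier_herm[OF x, symmetric] carrier_herm[OF a, symmetric])
qed

theorem part2:
  assumes D: "aos dv D" and E: "aos dw E" and x: "x \<in> max_tp dv D dw E ni"
    and G: "aos dx G" and H: "aos dy H" and a: "a \<in> min_tp dx G dy H n"
  shows "xa_tensor dv dw ni x dx dy n a \<in>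
     cmax3 (dv * dx) (min_tp dv D dx G 1) (dw * dy) (min_tp dw E dy H 1) (ni * n) (psd (ni * n))"
proof -
  have Gc: "\<And>k. 1 \<le> k \<Longrightarrow> G k \<subseteq> carrier dx k" using G aos_carrier by blast
  have Hc: "\<And>k. 1 \<le> k \<Longrightarrow> H k \<subseteq> carrier dy k" using H aos_carrier by blast
  have xD: "x \<in> dual_cone (dv*dw) ni (min_tp dv (dual_sys dv D) dw (dual_sys dw E) ni)"
    using x by (simp add: max_tp_def dual_sys_def)
  have xC: "x \<in> carrier (dv*dw) ni" using xD dual_cone_carrier by blast
  have aC: "a \<in> carrier (dx*dy) n" using min_tp_carrier[OF Gc Hc] a by blast
  show ?thesis unfolding cmax3_def
  proof (intro CollectI conjI ballI xa_carrier[OF xC aC])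
    fix l1 l2 l3
    assume l1: "l1 \<in> dual_cone (dv*dx) 1 (min_tp dv D dx G 1)"
      and l2: "l2 \<in> dual_cone (dw*dy) 1 (min_tp dw E dy H 1)"
      and l3: "l3 \<in> dual_cone 1 (ni*n) (psd (ni*n))"
    have l1C: "l1 \<in> carrier (dv*dx) 1" using l1 dual_cone_carrier by blast
    have l2C: "l2 \<in> carrier (dw*dy) 1" using l2 dual_cone_carrier by blast
    let ?b = "bmap dx dy dv dw l1 l2 a"
    have b: "?b \<in> min_tp dv (dual_sys dv D) dw (dual_sys dw E) n"
      unfolding bmap_def
    proof (rule min_tp_map[OF Gc Hc dual_sys_carrier dual_sys_carrier _ _ a])
      fix k g assume k: "1 \<le> k" and g: "g \<in> G k"
      have gC: "g \<in> carrier dx k" using Gc[OF k] g by blast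
      show "lin_apply dx dv (lmat dx l1) g \<in> dual_sys dv D k"
        unfolding dual_sys_def dual_cone_def
        using el_dual[OF l1 k _ g] lin_apply_carrier[OF gC] by auto
    next
      fix k h assume k: "1 \<le> k" and h: "h \<in> H k"
      have hC: "h \<in> carrier dy k" using Hc[OF k] h by blast
      show "lin_apply dy dw (lmat dy l2) h \<in> dual_sys dw E k"
        unfolding dual_sys_def dual_cone_def
        using el_dual[OF l2 k _ h] lin_apply_carrier[OF hC] by auto
    qed
    have bC: "?b \<in> carrier (dv*dw) n" unfolding bmap_def by (rule lin_apply_carrier[OF aC])
    have pos: "0 \<le> pair (dv*dw) ni (compress n ni V ?b) x" for V
    proof -
      have "compress n ni V ?b \<in> min_tp dv (dual_sys dv D) dw (dual_sys dw E) ni"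
        by (rule min_tp_compress[OF dual_sys_carrier dual_sys_carrier b])
      then show ?thesis using xD unfolding dual_cone_def by blast
    qed
    have "qel dv dw ni n x ?b \<in> psd (ni*n)" by (rule qel_psd[OF xC bC pos])
    then have "0 \<le> pair 1 (ni*n) (qel dv dw ni n x ?b) l3" using l3 unfolding dual_cone_def by blast
    then show "0 \<le> trip_eval (dv*dx) (dw*dy) (ni*n) l1 l2 l3 (xa_tensor dv dw ni x dx dy n a)"
      by (simp only: trip_T[OF l1C l2C])
  qed
qed


lemma pair_compress_adj:
  "pair d m z (compress n m V w) = pair d n (compress m n (\<lambda>i p. V p i) z) w"
proof -
  have "pair d m z (compress n m V w) = Re (\<Sum>k<d. \<Sum>i<m. \<Sum>j<m. \<Sum>p<n. \<Sum>q<n. z k i j * cnj (V p i) * w k p q * V q j)"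
    by (simp add: pair_def compress_def sum_distrib_left mult_ac)
  also have "\<dots> = Re (\<Sum>k<d. \<Sum>i<m. \<Sum>p<n. \<Sum>q<n. \<Sum>j<m. z k i j * cnj (V p i) * w k p q * V q j)"
    by (intro arg_cong[where f=Re], rule sum.cong[OF refl], rule sum.cong[OF refl], rule sum_swap2)
  also have "\<dots> = Re (\<Sum>k<d. \<Sum>p<n. \<Sum>q<n. \<Sum>i<m. \<Sum>j<m. z k i j * cnj (V p i) * w k p q * V q j)"
    by (intro arg_cong[where f=Re], rule sum.cong[OF refl], rule sum_swap2)
  also have "\<dots> = pair d n (compress m n (\<lambda>i p. V p i) z) w"
    by (simp add: pair_def compress_def sum_distrib_left sum_distrib_right mult_ac)
  finally show ?thesis .
qed

lemma dual_compress:
  assumes G: "aos d G" and n: "1 \<le> n" and m: "1 \<le> m" and w: "w \<in> dual_sys d G n"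
  shows "compress n m V w \<in> dual_sys d G m"
  unfolding dual_sys_def dual_cone_def
proof (intro CollectI conjI ballI)
  have wC: "w \<in> carrier d n" using w dual_sys_carrier by blast
  show "compress n m V w \<in> carrier d m" by (rule compress_carrier[OF wC])
  fix z assume z: "z \<in> G m"
  have "compress m n (\<lambda>i p. V p i) z \<in> G n" by (rule aos_compress[OF G m n z])
  then have "0 \<le> pair d n (compress m n (\<lambda>i p. V p i) z) w" using w by (simp add: dual_sys_def dual_cone_def)
  then show "0 \<le> pair d m z (compress n m V w)" by (simp add: pair_compress_adj)
qed

definition ek :: "nat \<Rightarrow> elt" where "ek k0 = (\<lambda>k i j. if k = k0 \<and> i = 0 \<and> j = 0 then 1 else 0)"

lemma ek_carrier: "k0 < d \<Longrightarrow> ek k0 \<in> carrier d 1"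
  by (rule carrierI') (auto simp: ek_def)

lemma pair_ek:
  assumes "k0 < d" shows "pair d 1 (ek k0) w = Re (w k0 0 0)"
proof -
  have "pair d 1 (ek k0) w = Re (\<Sum>k<d. (if k = k0 then w k 0 0 else 0))"
    unfolding pair_def by (intro arg_cong[where f=Re], rule sum.cong[OF refl]) (simp add: ek_def)
  also have "\<dots> = Re (w k0 0 0)" using assms by (simp add: sum.delta)
  finally show ?thesis .
qed

definition nrm :: "nat \<Rightarrow> elt \<Rightarrow> real" where "nrm d y = (\<Sum>k<d. cmod (y k 0 0))"

lemma nrm_ek: "k0 < d \<Longrightarrow> nrm d (zscale r (ek k0)) = \<bar>r\<bar>"
  by (simp add: nrm_def zscale_def ek_def if_distrib sum.delta norm_mult cong: if_cong)

lemma dual_sharp: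
  assumes G: "aos d G" and w1: "w \<in> dual_cone d 1 (G 1)" and w2: "zneg w \<in> dual_cone d 1 (G 1)"
  shows "w = zzero"
proof -
  have P: "proper_cone d (G 1)" by (rule aos_proper[OF G])
  then obtain z0 e0 where z0: "z0 \<in> G 1" and e0: "e0 > 0"
    and ball: "\<And>u. u \<in> carrier d 1 \<Longrightarrow> (\<Sum>k<d. cmod (u k 0 0 - z0 k 0 0)) < e0 \<Longrightarrow> u \<in> G 1"
    unfolding proper_cone_def by blast
  have GC: "G 1 \<subseteq> carrier d 1" using P unfolding proper_cone_def by blast
  have wC: "w \<in> carrier d 1" using w1 dual_cone_carrier by blast
  have zero: "pair d 1 y w = 0" if "y \<in> G 1" for y
  proof -
    have "0 \<le> pair d 1 y w" using w1 that unfolding dual_cone_def by blast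
    moreover have "0 \<le> pair d 1 y (zneg w)" using w2 that unfolding dual_cone_def by blast
    moreover have "pair d 1 y (zneg w) = - pair d 1 y w"
      by (simp add: pair_def zneg_def sum_negf Re_sum)
    ultimately show ?thesis by linarith
  qed
  have wk: "w k 0 0 = 0" if k: "k < d" for k
  proof -
    define u where "u = zadd z0 (zscale (e0/2) (ek k))"
    have uC: "u \<in> carrier d 1" unfolding u_def
      using GC z0 by (intro zadd_carrier zscale_carrier ek_carrier k) auto
    have "(\<Sum>k'<d. cmod (u k' 0 0 - z0 k' 0 0)) = nrm d (zscale (e0/2) (ek k))"
      by (simp add: u_def nrm_def zadd_def)
    also have "\<dots> = e0/2" using nrm_ek[OF k] e0 by simp
    finally have "u \<in> G 1" using ball[OF uC] e0 by simp
    then have "pair d 1 u w = 0" by (rule zero)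
    moreover have "pair d 1 u w = pair d 1 z0 w + e0/2 * pair d 1 (ek k) w"
      by (simp only: u_def pair_zadd_left pair_zscale_left)
    moreover note pair_ek[OF k, of w]
    ultimately have "Re (w k 0 0) = 0" using zero[OF z0] e0 by simp
    moreover have "complex_of_real (Re (w k 0 0)) = w k 0 0" by (rule carrier_real1[OF wC])
    ultimately show ?thesis by (metis of_real_0)
  qed
  show ?thesis
    by (rule carrier_eqI[OF wC zzero_carrier]) (auto simp: zzero_def wk)
qed

lemma bw_finite:
  fixes f :: "nat \<Rightarrow> 'i \<Rightarrow> complex"
  assumes "finite I" "\<And>m i. i \<in> I \<Longrightarrow> cmod (f m i) \<le> B"
  shows "\<exists>r. strict_mono r \<and> (\<forall>i\<in>I. convergent (\<lambda>m. f (r m) i))"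
  using assms
proof (induction I rule: finite_induct)
  case empty
  show ?case by (intro exI[of _ id]) (auto simp: strict_mono_def)
next
  case (insert i0 I)
  obtain r1 where r1: "strict_mono r1" "\<forall>i\<in>I. convergent (\<lambda>m. f (r1 m) i)" using insert by blast
  have "bounded (range (\<lambda>m. f (r1 m) i0))"
    unfolding bounded_iff using insert.prems by auto
  then obtain l r2 where r2: "strict_mono r2" "((\<lambda>m. f (r1 m) i0) \<circ> r2) \<longlonglongrightarrow> l"
    using bounded_imp_convergent_subsequence by blast
  show ?case
  proof (intro exI[of _ "r1 \<circ> r2"] conjI ballI)
    show "strict_mono (r1 \<circ> r2)" using r1(1) r2(1) by (rule strict_mono_o)
    fix i assume "i \<in> insert i0 I"
    then show "convergent (\<lambda>m. f ((r1 \<circ> r2) m) i)"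
    proof
      assume "i = i0" then show ?thesis using r2(2) by (auto simp: convergent_def o_def)
    next
      assume "i \<in> I"
      then have "(\<lambda>m. f (r1 m) i) \<longlonglongrightarrow> lim (\<lambda>m. f (r1 m) i)" using r1(2) convergent_LIMSEQ_iff by blast
      from LIMSEQ_subseq_LIMSEQ[OF this r2(1)] show ?thesis by (auto simp: convergent_def o_def)
    qed
  qed
qed


definition sg :: "nat \<Rightarrow> nat set \<Rightarrow> elt \<Rightarrow> real" where
  "sg d A y = (\<Sum>k<d. (if k \<in> A then 1 else -1) * Re (y k 0 0))"

lemma cmod_real1: "y \<in> carrier d 1 \<Longrightarrow> cmod (y k 0 0) = \<bar>Re (y k 0 0)\<bar>"
  by (metis carrier_real1 norm_of_real)

lemma sg_le_nrm: "sg d A y \<le> nrm d y"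
  unfolding sg_def nrm_def
proof (rule sum_mono)
  fix k show "(if k \<in> A then 1 else -1) * Re (y k 0 0) \<le> cmod (y k 0 0)"
    using abs_Re_le_cmod[of "y k 0 0"] by auto
qed

lemma sg_sign: "y \<in> carrier d 1 \<Longrightarrow> sg d {k. k < d \<and> 0 \<le> Re (y k 0 0)} y = nrm d y"
  unfolding sg_def nrm_def by (intro sum.cong refl) (auto simp: cmod_real1)

lemma sg_zadd: "sg d A (zadd y z) = sg d A y + sg d A z"
  by (simp add: sg_def zadd_def sum.distrib ring_distribs)

lemma sg_zscale: "sg d A (zscale t y) = t * sg d A y"
  by (simp add: sg_def zscale_def sum_distrib_left mult_ac)

lemma nrm_nonneg: "0 \<le> nrm d y" by (simp add: nrm_def sum_nonneg)

lemma nrm_zscale: "nrm d (zscale t y) = \<bar>t\<bar> * nrm d y"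
  by (simp add: nrm_def zscale_def norm_mult sum_distrib_left)

lemma cmod_le_nrm: "k < d \<Longrightarrow> cmod (y k 0 0) \<le> nrm d y"
  unfolding nrm_def by (rule member_le_sum) auto

lemma cto_nrm: "cto s z \<Longrightarrow> (\<lambda>m. nrm d (s m)) \<longlonglongrightarrow> nrm d z"
  unfolding cto_def nrm_def by (auto intro!: tendsto_intros)

lemma cto_zadd: "cto s z \<Longrightarrow> cto t y \<Longrightarrow> cto (\<lambda>m. zadd (s m) (t m)) (zadd z y)"
  unfolding cto_def zadd_def by (auto intro!: tendsto_intros)

lemma pair_bound: "\<bar>pair d 1 y v\<bar> \<le> nrm d y * nrm d v"
proof -
  have "\<bar>pair d 1 y v\<bar> = \<bar>Re (\<Sum>k<d. y k 0 0 * v k 0 0)\<bar>" by (simp add: pair_def)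
  also have "\<dots> \<le> cmod (\<Sum>k<d. y k 0 0 * v k 0 0)" by (rule abs_Re_le_cmod)
  also have "\<dots> \<le> (\<Sum>k<d. cmod (y k 0 0 * v k 0 0))" by (rule norm_sum)
  also have "\<dots> \<le> (\<Sum>k<d. cmod (y k 0 0) * nrm d v)"
    by (intro sum_mono) (simp add: norm_mult mult_left_mono cmod_le_nrm)
  also have "\<dots> = nrm d y * nrm d v" by (simp add: nrm_def sum_distrib_right)
  finally show ?thesis .
qed

lemma carrier_sum:
  assumes "\<And>A. A \<in> F \<Longrightarrow> f A \<in> carrier d n"
  shows "(\<lambda>k i j. \<Sum>A\<in>F. f A k i j) \<in> carrier d n"
proof (rule carrierI')
  fix k i j assume "\<not> (k < d \<and> i < n \<and> j < n)"
  then show "(\<Sum>A\<in>F. f A k i j) = 0" using assms carrier_zero' by (intro sum.neutral) blast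
next
  fix k i j show "(\<Sum>A\<in>F. f A k j i) = cnj (\<Sum>A\<in>F. f A k i j)"
    unfolding cnj_sum using assms carrier_herm by (intro sum.cong refl) blast
qed

lemma pair_sum_right: "pair d n y (\<lambda>k i j. \<Sum>A\<in>F. f A k i j) = (\<Sum>A\<in>F. pair d n y (f A))"
proof -
  have "pair d n y (\<lambda>k i j. \<Sum>A\<in>F. f A k i j) = Re (\<Sum>k<d. \<Sum>i<n. \<Sum>j<n. \<Sum>A\<in>F. y k i j * f A k i j)"
    by (simp add: pair_def sum_distrib_left)
  also have "\<dots> = Re (\<Sum>A\<in>F. \<Sum>k<d. \<Sum>i<n. \<Sum>j<n. y k i j * f A k i j)"
  proof -
    have "(\<Sum>k<d. \<Sum>i<n. \<Sum>j<n. \<Sum>A\<in>F. y k i j * f A k i j) = (\<Sum>k<d. \<Sum>A\<in>F. \<Sum>i<n. \<Sum>j<n. y k i j * f A k i j)"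
      by (rule sum.cong[OF refl], rule sum_swap2[symmetric])
    also have "\<dots> = (\<Sum>A\<in>F. \<Sum>k<d. \<Sum>i<n. \<Sum>j<n. y k i j * f A k i j)" by (rule sum.swap)
    finally show ?thesis by simp
  qed
  also have "\<dots> = (\<Sum>A\<in>F. pair d n y (f A))" by (simp add: pair_def Re_sum)
  finally show ?thesis .
qed


definition SA :: "nat \<Rightarrow> elt set \<Rightarrow> nat set \<Rightarrow> elt set" where
  "SA d K A = {zadd y k | y k. y \<in> K \<and> 1 \<le> sg d A y \<and> k \<in> K}"

lemma SA_carrier: "K \<subseteq> carrier d 1 \<Longrightarrow> SA d K A \<subseteq> carrier d 1"
  unfolding SA_def by (auto intro!: zadd_carrier)

lemma SA_convex:
  assumes cone: "cvx_cone K"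
  shows "convex_set (SA d K A)"
  unfolding convex_set_def
proof (intro ballI allI impI)
  fix x1 x2 and t :: real
  assume x1: "x1 \<in> SA d K A" and x2: "x2 \<in> SA d K A" and t: "0 \<le> t \<and> t \<le> 1"
  obtain y1 k1 where 1: "x1 = zadd y1 k1" "y1 \<in> K" "1 \<le> sg d A y1" "k1 \<in> K" using x1 unfolding SA_def by blast
  obtain y2 k2 where 2: "x2 = zadd y2 k2" "y2 \<in> K" "1 \<le> sg d A y2" "k2 \<in> K" using x2 unfolding SA_def by blast
  let ?y = "zadd (zscale t y1) (zscale (1-t) y2)"
  let ?k = "zadd (zscale t k1) (zscale (1-t) k2)"
  have eq: "zadd (zscale t x1) (zscale (1-t) x2) = zadd ?y ?k"
    by (auto simp: 1 2 zadd_def zscale_def algebra_simps intro!: ext)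
  have yK: "?y \<in> K" using 1 2 t cone by (intro cone_add cone_scale) auto
  have kK: "?k \<in> K" using 1 2 t cone by (intro cone_add cone_scale) auto
  have "t * 1 \<le> t * sg d A y1" using t 1 by (intro mult_left_mono) auto
  moreover have "(1-t) * 1 \<le> (1-t) * sg d A y2" using t 2 by (intro mult_left_mono) auto
  ultimately have "1 \<le> sg d A ?y" by (simp add: sg_zadd sg_zscale)
  then show "zadd (zscale t x1) (zscale (1-t) x2) \<in> SA d K A"
    unfolding SA_def eq using yK kK by blast
qed

lemma SA_nolim:
  assumes KC: "K \<subseteq> carrier d 1" and cone: "cvx_cone K" and cl: "seq_closed K"
    and sharp: "\<And>z. z \<in> K \<Longrightarrow> zneg z \<in> K \<Longrightarrow> z = zzero"
  shows "\<not> (\<exists>s. (\<forall>m. s m \<in> SA d K A) \<and> cto s zzero)"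
proof
  assume "\<exists>s. (\<forall>m. s m \<in> SA d K A) \<and> cto s zzero"
  then obtain s where s: "\<And>m. s m \<in> SA d K A" "cto s zzero" by blast
  from s(1) have "\<forall>m. \<exists>y k. s m = zadd y k \<and> y \<in> K \<and> 1 \<le> sg d A y \<and> k \<in> K" unfolding SA_def by blast
  then obtain y k where yk: "\<And>m. s m = zadd (y m) (k m)" "\<And>m. y m \<in> K" "\<And>m. 1 \<le> sg d A (y m)" "\<And>m. k m \<in> K"
    by metis
  define t where "t m = nrm d (y m) + nrm d (k m)" for m
  have t1: "1 \<le> t m" for m using sg_le_nrm[of d A "y m"] yk(3)[of m] nrm_nonneg[of d "k m"] by (simp add: t_def)
  define y' where "y' m = zscale (1 / t m) (y m)" for m
  define k' where "k' m = zscale (1 / t m) (k m)" for m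
  have tpos: "0 \<le> 1 / t m" for m using t1[of m] by simp
  have y'K: "y' m \<in> K" for m unfolding y'_def using cone yk(2) tpos by (rule cone_scale)
  have k'K: "k' m \<in> K" for m unfolding k'_def using cone yk(4) tpos by (rule cone_scale)
  have n1: "nrm d (y' m) + nrm d (k' m) = 1" for m
  proof -
    have tp: "0 < t m" using t1[of m] by linarith
    have "nrm d (y' m) + nrm d (k' m) = (1 / t m) * (nrm d (y m) + nrm d (k m))"
      using tp by (simp add: y'_def k'_def nrm_zscale algebra_simps)
    also have "\<dots> = (1 / t m) * t m" by (simp add: t_def)
    also have "\<dots> = 1" using tp by simp
    finally show ?thesis .
  qed
  have by': "cmod (y' m kk 0 0) \<le> 1" if "kk < d" for m kk
    using cmod_le_nrm[OF that, of "y' m"] n1[of m] nrm_nonneg[of d "k' m"] by linarith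
  have bk': "cmod (k' m kk 0 0) \<le> 1" if "kk < d" for m kk
    using cmod_le_nrm[OF that, of "k' m"] n1[of m] nrm_nonneg[of d "y' m"] by linarith
  define f where "f m p = (if snd p then y' m (fst p) 0 0 else k' m (fst p) 0 0)" for m and p :: "nat \<times> bool"
  have "\<exists>r. strict_mono r \<and> (\<forall>p\<in>{..<d} \<times> UNIV. convergent (\<lambda>m. f (r m) p))"
    by (rule bw_finite[where B=1]) (auto simp: f_def by' bk')
  then obtain r where r: "strict_mono r" "\<And>p. p \<in> {..<d} \<times> UNIV \<Longrightarrow> convergent (\<lambda>m. f (r m) p)" by blast
  define Y :: elt where "Y kk i j = (if kk < d \<and> i = 0 \<and> j = 0 then lim (\<lambda>m. y' (r m) kk 0 0) else 0)" for kk i j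
  define Kk :: elt where "Kk kk i j = (if kk < d \<and> i = 0 \<and> j = 0 then lim (\<lambda>m. k' (r m) kk 0 0) else 0)" for kk i j
  have y'C: "y' m \<in> carrier d 1" for m using y'K KC by blast
  have k'C: "k' m \<in> carrier d 1" for m using k'K KC by blast
  have cY: "cto (\<lambda>m. y' (r m)) Y"
    unfolding cto_def
  proof (intro allI)
    fix kk i j
    show "(\<lambda>m. y' (r m) kk i j) \<longlonglongrightarrow> Y kk i j"
    proof (cases "kk < d \<and> i = 0 \<and> j = 0")
      case True
      have "convergent (\<lambda>m. f (r m) (kk, True))" using True by (intro r(2)) auto
      then show ?thesis using True by (simp add: Y_def f_def convergent_LIMSEQ_iff)
    next
      case False
      have "y' (r m) kk i j = 0" for m by (rule carrier_zero'[OF y'C]) (use False in auto)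
      then have "(\<lambda>m. y' (r m) kk i j) = (\<lambda>m. 0)" by auto
      moreover have "Y kk i j = 0" using False unfolding Y_def by auto
      ultimately show ?thesis by simp
    qed
  qed
  have cK: "cto (\<lambda>m. k' (r m)) Kk"
    unfolding cto_def
  proof (intro allI)
    fix kk i j
    show "(\<lambda>m. k' (r m) kk i j) \<longlonglongrightarrow> Kk kk i j"
    proof (cases "kk < d \<and> i = 0 \<and> j = 0")
      case True
      have "convergent (\<lambda>m. f (r m) (kk, False))" using True by (intro r(2)) auto
      then show ?thesis using True by (simp add: Kk_def f_def convergent_LIMSEQ_iff)
    next
      case False
      have "k' (r m) kk i j = 0" for m by (rule carrier_zero'[OF k'C]) (use False in auto)
      then have "(\<lambda>m. k' (r m) kk i j) = (\<lambda>m. 0)" by auto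
      moreover have "Kk kk i j = 0" using False unfolding Kk_def by auto
      ultimately show ?thesis by simp
    qed
  qed
  have YK: "Y \<in> K" by (rule seq_closed_cto[OF cl _ cY]) (use y'K in auto)
  have KkK: "Kk \<in> K" by (rule seq_closed_cto[OF cl _ cK]) (use k'K in auto)
  have sum0: "cto (\<lambda>m. zadd (y' (r m)) (k' (r m))) zzero"
    unfolding cto_def
  proof (intro allI)
    fix kk i j
    have sl: "(\<lambda>m. s (r m) kk i j) \<longlonglongrightarrow> 0"
      using LIMSEQ_subseq_LIMSEQ[OF _ r(1), of "\<lambda>m. s m kk i j" 0] s(2)
      by (simp add: cto_def zzero_def o_def)
    have eq: "zadd (y' (r m)) (k' (r m)) kk i j = complex_of_real (1 / t (r m)) * s (r m) kk i j" for m
      by (simp add: y'_def k'_def yk(1) zadd_def zscale_def algebra_simps)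
    have "(\<lambda>m. complex_of_real (1 / t (r m)) * s (r m) kk i j) \<longlonglongrightarrow> 0"
    proof (rule Lim_null_comparison)
      show "\<forall>\<^sub>F m in sequentially. norm (complex_of_real (1 / t (r m)) * s (r m) kk i j) \<le> cmod (s (r m) kk i j)"
      proof (rule always_eventually, rule allI)
        fix m
        have "\<bar>1 / t (r m)\<bar> \<le> 1" using t1[of "r m"] by simp
        then have "\<bar>1 / t (r m)\<bar> * cmod (s (r m) kk i j) \<le> cmod (s (r m) kk i j)"
          by (intro mult_left_le_one_le) auto
        moreover have "norm (complex_of_real (1 / t (r m)) * s (r m) kk i j) = \<bar>1 / t (r m)\<bar> * cmod (s (r m) kk i j)"
          by (simp only: norm_mult norm_of_real)
        ultimately show "norm (complex_of_real (1 / t (r m)) * s (r m) kk i j) \<le> cmod (s (r m) kk i j)" by simp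
      qed
      show "(\<lambda>m. cmod (s (r m) kk i j)) \<longlonglongrightarrow> 0" using tendsto_norm_zero[OF sl] .
    qed
    then show "(\<lambda>m. zadd (y' (r m)) (k' (r m)) kk i j) \<longlonglongrightarrow> zzero kk i j"
      by (simp add: eq zzero_def)
  qed
  have YK0: "zadd Y Kk = zzero"
  proof (intro ext)
    fix kk i j
    show "zadd Y Kk kk i j = zzero kk i j"
      using LIMSEQ_unique[of "\<lambda>m. zadd (y' (r m)) (k' (r m)) kk i j"] cto_zadd[OF cY cK] sum0
      unfolding cto_def by blast
  qed
  have "Kk = zneg Y"
  proof (intro ext)
    fix kk i j
    have "Y kk i j + Kk kk i j = 0" using YK0 by (metis zadd_def zzero_def)
    then show "Kk kk i j = zneg Y kk i j" by (simp add: zneg_def eq_neg_iff_add_eq_0 add.commute)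
  qed
  then have Y0: "Y = zzero" using sharp[OF YK] KkK by simp
  then have K0: "Kk = zzero" using YK0 by (simp add: zadd_def zzero_def)
  have "(\<lambda>m. nrm d (y' (r m)) + nrm d (k' (r m))) \<longlonglongrightarrow> nrm d Y + nrm d Kk"
    by (intro tendsto_add cto_nrm cY cK)
  moreover have "nrm d Y + nrm d Kk = 0" using Y0 K0 by (simp add: nrm_def zzero_def)
  ultimately have lim10: "(\<lambda>m. 1::real) \<longlonglongrightarrow> 0" using n1 by simp
  show False using LIMSEQ_unique[OF lim10 tendsto_const[of "1::real"]] by simp
qed


lemma per_A:
  assumes KC: "K \<subseteq> carrier d 1" and cone: "cvx_cone K" and cl: "seq_closed K"
    and sharp: "\<And>z. z \<in> K \<Longrightarrow> zneg z \<in> K \<Longrightarrow> z = zzero"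
  shows "\<exists>w\<in>dual_cone d 1 K. \<exists>\<delta>>0. \<forall>y\<in>K. 0 < sg d A y \<longrightarrow> \<delta> * sg d A y \<le> pair d 1 y w"
proof -
  have inSA: "zadd (zscale (1 / sg d A y) y) zzero \<in> SA d K A" if y: "y \<in> K" "0 < sg d A y" for y
  proof -
    have "zscale (1 / sg d A y) y \<in> K" using cone y by (intro cone_scale) auto
    moreover have "sg d A (zscale (1 / sg d A y) y) = 1" using y by (simp add: sg_zscale)
    ultimately show ?thesis unfolding SA_def using cone_zero[OF cone] by force
  qed
  show ?thesis
  proof (cases "SA d K A = {}")
    case True
    have z: "zzero \<in> dual_cone d 1 K" by (simp add: dual_cone_def zzero_carrier)
    show ?thesis
      by (rule bexI[OF _ z], rule exI[of _ 1]) (use inSA True in auto)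
  next
    case False
    obtain w \<delta> where w: "w \<in> carrier d 1" "\<delta> > 0" "\<And>s. s \<in> SA d K A \<Longrightarrow> pair d 1 zzero w + \<delta> \<le> pair d 1 s w"
      using separation[OF SA_carrier[OF KC] SA_convex[OF cone] False zzero_carrier SA_nolim[OF KC cone cl sharp]]
      by blast
    obtain y0 k0 where y0: "y0 \<in> K" "1 \<le> sg d A y0" using False unfolding SA_def by blast
    have wd: "w \<in> dual_cone d 1 K"
      unfolding dual_cone_def
    proof (intro CollectI conjI ballI w(1))
      fix k assume k: "k \<in> K"
      show "0 \<le> pair d 1 k w"
      proof (rule ccontr)
        assume "\<not> 0 \<le> pair d 1 k w"
        then have c: "pair d 1 k w < 0" by simp
        define tt where "tt = (\<bar>pair d 1 y0 w\<bar> + 1) / (- pair d 1 k w)"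
        have tt: "0 \<le> tt" using c unfolding tt_def by (intro divide_nonneg_pos) auto
        have tte: "tt * pair d 1 k w = - (\<bar>pair d 1 y0 w\<bar> + 1)" using c by (simp add: tt_def)
        have "zadd y0 (zscale tt k) \<in> SA d K A"
          unfolding SA_def using y0 cone_scale[OF cone k tt] by blast
        then have "\<delta> \<le> pair d 1 (zadd y0 (zscale tt k)) w" using w(3) by fastforce
        also have "\<dots> = pair d 1 y0 w + tt * pair d 1 k w" by (simp add: pair_zadd_left pair_zscale_left)
        finally show False using tte w(2) by linarith
      qed
    qed
    show ?thesis
    proof (intro bexI[OF _ wd] exI[of _ \<delta>] conjI w(2) ballI impI)
      fix y assume y: "y \<in> K" "0 < sg d A y"
      have "\<delta> \<le> pair d 1 (zadd (zscale (1 / sg d A y) y) zzero) w" using w(3)[OF inSA[OF y]] by simp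
      also have "\<dots> = pair d 1 y w / sg d A y" by (simp add: pair_zadd_left pair_zscale_left)
      finally show "\<delta> * sg d A y \<le> pair d 1 y w" using y(2) by (simp add: pos_le_divide_eq)
    qed
  qed
qed

lemma interior_main:
  assumes KC: "K \<subseteq> carrier d 1" and cone: "cvx_cone K" and cl: "seq_closed K"
    and sharp: "\<And>z. z \<in> K \<Longrightarrow> zneg z \<in> K \<Longrightarrow> z = zzero"
  shows "\<exists>w\<in>carrier d 1. \<exists>\<delta>>0. \<forall>y\<in>K. \<delta> * nrm d y \<le> pair d 1 y w"
proof -
  have ex: "\<forall>A\<in>Pow {..<d}. \<exists>p. fst p \<in> dual_cone d 1 K \<and> snd p > 0 \<and>
      (\<forall>y\<in>K. 0 < sg d A y \<longrightarrow> snd p * sg d A y \<le> pair d 1 y (fst p))"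
  proof
    fix A
    obtain w \<delta> where "w \<in> dual_cone d 1 K" "\<delta> > 0" "\<forall>y\<in>K. 0 < sg d A y \<longrightarrow> \<delta> * sg d A y \<le> pair d 1 y w"
      using per_A[OF KC cone cl sharp, of A] by blast
    then show "\<exists>p. fst p \<in> dual_cone d 1 K \<and> snd p > 0 \<and>
      (\<forall>y\<in>K. 0 < sg d A y \<longrightarrow> snd p * sg d A y \<le> pair d 1 y (fst p))"
      by (intro exI[of _ "(w, \<delta>)"]) simp
  qed
  obtain pf where pf: "\<And>A. A \<in> Pow {..<d} \<Longrightarrow> fst (pf A) \<in> dual_cone d 1 K \<and> snd (pf A) > 0 \<and>
      (\<forall>y\<in>K. 0 < sg d A y \<longrightarrow> snd (pf A) * sg d A y \<le> pair d 1 y (fst (pf A)))"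
    using bchoice[OF ex] by blast
  define W where "W = (\<lambda>k i j. \<Sum>A\<in>Pow {..<d}. fst (pf A) k i j)"
  define \<delta> where "\<delta> = Min ((\<lambda>A. snd (pf A)) ` Pow {..<d})"
  have fin: "finite ((\<lambda>A. snd (pf A)) ` Pow {..<d})" by simp
  have ne: "(\<lambda>A. snd (pf A)) ` Pow {..<d} \<noteq> {}" by blast
  have \<delta>pos: "\<delta> > 0" unfolding \<delta>_def using Min_gr_iff[OF fin ne] pf by auto
  have \<delta>le: "\<delta> \<le> snd (pf A)" if "A \<in> Pow {..<d}" for A
    unfolding \<delta>_def using that by (intro Min_le fin) auto
  have WC: "W \<in> carrier d 1" unfolding W_def
    by (rule carrier_sum) (use pf dual_cone_carrier in blast)
  show ?thesis
  proof (intro bexI[OF _ WC] exI[of _ \<delta>] conjI \<delta>pos ballI)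
    fix y assume y: "y \<in> K"
    have yC: "y \<in> carrier d 1" using y KC by blast
    have nn: "0 \<le> pair d 1 y (fst (pf A))" if "A \<in> Pow {..<d}" for A
      using pf[OF that] y unfolding dual_cone_def by blast
    have pW: "pair d 1 y W = (\<Sum>A\<in>Pow {..<d}. pair d 1 y (fst (pf A)))"
      unfolding W_def by (rule pair_sum_right)
    show "\<delta> * nrm d y \<le> pair d 1 y W"
    proof (cases "nrm d y = 0")
      case True
      have "0 \<le> (\<Sum>A\<in>Pow {..<d}. pair d 1 y (fst (pf A)))" using nn by (intro sum_nonneg) auto
      then show ?thesis unfolding pW True by simp
    next
      case False
      then have np: "0 < nrm d y" using nrm_nonneg[of d y] by linarith
      define A0 where "A0 = {k. k < d \<and> 0 \<le> Re (y k 0 0)}"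
      have A0: "A0 \<in> Pow {..<d}" by (auto simp: A0_def)
      have sgA: "sg d A0 y = nrm d y" unfolding A0_def by (rule sg_sign[OF yC])
      have "\<delta> * nrm d y \<le> snd (pf A0) * nrm d y" using \<delta>le[OF A0] np by (intro mult_right_mono) auto
      also have "\<dots> \<le> pair d 1 y (fst (pf A0))" using pf[OF A0] y np sgA by auto
      also have "\<dots> \<le> (\<Sum>A\<in>Pow {..<d}. pair d 1 y (fst (pf A)))"
        using A0 nn by (intro member_le_sum) auto
      finally show ?thesis unfolding pW .
    qed
  qed
qed

lemma pair_split_right: "pair d n y u = pair d n y w + pair d n y (zsub u w)"
  by (simp add: pair_def zsub_def ring_distribs sum.distrib sum_subtractf Re_sum)

lemma nrm_zsub: "nrm d (zsub u w) = (\<Sum>k<d. cmod (u k 0 0 - w k 0 0))"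
  by (simp add: nrm_def zsub_def)

lemma dual_aos:
  assumes G: "aos d G"
  shows "aos d (dual_sys d G)"
proof -
  have P: "proper_cone d (G 1)" by (rule aos_proper[OF G])
  have KC: "G 1 \<subseteq> carrier d 1" and cone: "cvx_cone (G 1)" and cl: "seq_closed (G 1)"
    and sharp: "\<And>z. z \<in> G 1 \<Longrightarrow> zneg z \<in> G 1 \<Longrightarrow> z = zzero"
    using P unfolding proper_cone_def by blast+
  obtain W \<delta> where W: "W \<in> carrier d 1" "\<delta> > 0" "\<And>y. y \<in> G 1 \<Longrightarrow> \<delta> * nrm d y \<le> pair d 1 y W"
    using interior_main[OF KC cone cl sharp] by blast
  have Wd: "W \<in> dual_cone d 1 (G 1)" unfolding dual_cone_def
  proof (intro CollectI conjI ballI W(1))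
    fix y assume "y \<in> G 1"
    then show "0 \<le> pair d 1 y W" using W(3) W(2) nrm_nonneg[of d y] by (meson mult_nonneg_nonneg order_trans less_imp_le)
  qed
  have int: "\<forall>u\<in>carrier d 1. (\<Sum>k<d. cmod (u k 0 0 - W k 0 0)) < \<delta> \<longrightarrow> u \<in> dual_cone d 1 (G 1)"
  proof (intro ballI impI)
    fix u assume uC: "u \<in> carrier d 1" and close: "(\<Sum>k<d. cmod (u k 0 0 - W k 0 0)) < \<delta>"
    show "u \<in> dual_cone d 1 (G 1)" unfolding dual_cone_def
    proof (intro CollectI conjI ballI uC)
      fix y assume y: "y \<in> G 1"
      have b: "\<bar>pair d 1 y (zsub u W)\<bar> \<le> nrm d y * nrm d (zsub u W)" by (rule pair_bound)
      have "nrm d y * nrm d (zsub u W) \<le> nrm d y * \<delta>"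
        using close nrm_nonneg[of d y] by (intro mult_left_mono) (auto simp: nrm_zsub)
      then show "0 \<le> pair d 1 y u" using b W(3)[OF y] pair_split_right[of d 1 y u W] by (simp add: mult.commute)
    qed
  qed
  show ?thesis
    unfolding aos_def
  proof (intro conjI allI impI ballI)
    fix n :: nat assume "1 \<le> n"
    show "dual_sys d G n \<subseteq> carrier d n" by (rule dual_sys_carrier)
    show "cvx_cone (dual_sys d G n)" by (simp add: dual_sys_def dual_cone_cone)
    show "seq_closed (dual_sys d G n)" by (simp add: dual_sys_def dual_cone_closed)
  next
    fix n m :: nat and V z assume "1 \<le> n" "1 \<le> m" "z \<in> dual_sys d G n"
    then show "compress n m V z \<in> dual_sys d G m" using dual_compress[OF G] by blast
  next
    show "proper_cone d (dual_sys d G 1)"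
      unfolding proper_cone_def dual_sys_def
    proof (intro conjI ballI impI dual_cone_carrier dual_cone_cone dual_cone_closed)
      fix z assume "z \<in> dual_cone d 1 (G 1)" "zneg z \<in> dual_cone d 1 (G 1)"
      then show "z = zzero" by (rule dual_sharp[OF G])
    next
      show "\<exists>z\<in>dual_cone d 1 (G 1). \<exists>e>0. \<forall>w\<in>carrier d 1. (\<Sum>k<d. cmod (w k 0 0 - z k 0 0)) < e \<longrightarrow> w \<in> dual_cone d 1 (G 1)"
        using Wd W(2) int by blast
    qed
  qed
qed


definition one1 :: elt where "one1 = (\<lambda>k i j. if k = 0 \<and> i = 0 \<and> j = 0 then 1 else 0)"

definition Rsys :: osys where
  "Rsys = (\<lambda>m. cc_hull 1 m {compress 1 m V one1 | V. True})"

lemma one1_carrier: "one1 \<in> carrier 1 1"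
  by (rule carrierI') (auto simp: one1_def)

lemma rgen_carrier: "{compress 1 m V one1 | V. True} \<subseteq> carrier 1 m"
  using compress_carrier[OF one1_carrier] by blast

lemma rank1_val: "compress 1 m V one1 0 i j = (if i < m \<and> j < m then cnj (V 0 i) * V 0 j else 0)"
  by (simp add: compress_def one1_def)

lemma rank1_val': "compress (Suc 0) m V one1 0 i j = (if i < m \<and> j < m then cnj (V 0 i) * V 0 j else 0)"
  using rank1_val by simp

lemma psd_cone: "cvx_cone (psd m)"
proof (intro cvx_coneI)
  show "zzero \<in> psd m" unfolding psd_def mem_Collect_eq by (intro conjI zzero_carrier allI) (simp add: zzero_def)
next
  fix x y assume x: "x \<in> psd m" and y: "y \<in> psd m"
  show "zadd x y \<in> psd m" unfolding psd_def
  proof (intro CollectI conjI allI)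
    show "zadd x y \<in> carrier 1 m" using x y by (intro zadd_carrier) (auto simp: psd_def)
    fix v
    have "0 \<le> Re (\<Sum>i<m. \<Sum>j<m. cnj (v i) * x 0 i j * v j)" using x by (simp add: psd_def)
    moreover have "0 \<le> Re (\<Sum>i<m. \<Sum>j<m. cnj (v i) * y 0 i j * v j)" using y by (simp add: psd_def)
    moreover have "(\<Sum>i<m. \<Sum>j<m. cnj (v i) * zadd x y 0 i j * v j) = (\<Sum>i<m. \<Sum>j<m. cnj (v i) * x 0 i j * v j) + (\<Sum>i<m. \<Sum>j<m. cnj (v i) * y 0 i j * v j)"
      by (simp add: zadd_def ring_distribs sum.distrib)
    ultimately show "0 \<le> Re (\<Sum>i<m. \<Sum>j<m. cnj (v i) * zadd x y 0 i j * v j)" by simp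
  qed
next
  fix x and r :: real assume x: "x \<in> psd m" and r: "0 \<le> r"
  show "zscale r x \<in> psd m" unfolding psd_def
  proof (intro CollectI conjI allI)
    show "zscale r x \<in> carrier 1 m" using x by (intro zscale_carrier) (auto simp: psd_def)
    fix v
    have "0 \<le> Re (\<Sum>i<m. \<Sum>j<m. cnj (v i) * x 0 i j * v j)" using x by (simp add: psd_def)
    moreover have "(\<Sum>i<m. \<Sum>j<m. cnj (v i) * zscale r x 0 i j * v j) = complex_of_real r * (\<Sum>i<m. \<Sum>j<m. cnj (v i) * x 0 i j * v j)"
      by (simp add: zscale_def sum_distrib_left mult_ac)
    ultimately show "0 \<le> Re (\<Sum>i<m. \<Sum>j<m. cnj (v i) * zscale r x 0 i j * v j)" using r by simp
  qed
qed

lemma psd_closed: "seq_closed (psd m)"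
proof (intro seq_closedI)
  fix s z assume s: "\<forall>n. s n \<in> psd m" and c: "cto s z"
  show "z \<in> psd m" unfolding psd_def
  proof (intro CollectI conjI allI)
    show "z \<in> carrier 1 m" using s by (intro carrier_closed[OF _ c]) (auto simp: psd_def)
    fix v
    have "(\<lambda>n. Re (\<Sum>i<m. \<Sum>j<m. cnj (v i) * s n 0 i j * v j)) \<longlonglongrightarrow> Re (\<Sum>i<m. \<Sum>j<m. cnj (v i) * z 0 i j * v j)"
      using c unfolding cto_def by (auto intro!: tendsto_intros)
    then show "0 \<le> Re (\<Sum>i<m. \<Sum>j<m. cnj (v i) * z 0 i j * v j)"
      by (rule LIMSEQ_le_const) (use s in \<open>auto simp: psd_def\<close>)
  qed
qed

lemma rank1_psd: "compress 1 m V one1 \<in> psd m"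
  unfolding psd_def
proof (intro CollectI conjI allI)
  show "compress 1 m V one1 \<in> carrier 1 m" by (rule compress_carrier[OF one1_carrier])
  fix v
  have "(\<Sum>i<m. \<Sum>j<m. cnj (v i) * compress 1 m V one1 0 i j * v j)
     = (\<Sum>i<m. \<Sum>j<m. cnj (V 0 i * v i) * (V 0 j * v j))"
    by (intro sum.cong refl) (simp add: rank1_val' mult_ac)
  also have "\<dots> = (\<Sum>i<m. cnj (V 0 i * v i)) * (\<Sum>j<m. V 0 j * v j)"
    by (rule sum_product[symmetric])
  also have "\<dots> = cnj (\<Sum>i<m. V 0 i * v i) * (\<Sum>j<m. V 0 j * v j)"
    by (simp add: cnj_sum)
  also have "\<dots> = complex_of_real ((cmod (\<Sum>j<m. V 0 j * v j))\<^sup>2)"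
    by (metis complex_norm_square mult.commute of_real_power)
  finally show "0 \<le> Re (\<Sum>i<m. \<Sum>j<m. cnj (v i) * compress 1 m V one1 0 i j * v j)" by simp
qed


lemma Rsys_sub_psd: "Rsys m \<subseteq> psd m"
  unfolding Rsys_def
proof (intro cc_hull_sub psd_cone psd_closed)
  show "psd m \<subseteq> carrier 1 m" by (auto simp: psd_def)
  show "{compress 1 m V one1 |V. True} \<subseteq> psd m" using rank1_psd by blast
qed

lemma rgen_in: "compress 1 m V one1 \<in> Rsys m"
proof -
  have "compress 1 m V one1 \<in> {compress 1 m V one1 | V. True}" by blast
  then have "compress 1 m V one1 \<in> cc_hull 1 m {compress 1 m V one1 | V. True}"
    using cc_hull_gen[of "{compress 1 m V one1 | V. True}" 1 m] by (rule subsetD[rotated])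
  then show ?thesis by (simp add: Rsys_def)
qed

lemma Rsys_aos: "aos 1 Rsys"
  unfolding aos_def
proof (intro conjI allI impI ballI)
  fix n :: nat
  show "Rsys n \<subseteq> carrier 1 n" unfolding Rsys_def by (rule cc_hull_carrier[OF rgen_carrier])
  show "cvx_cone (Rsys n)" unfolding Rsys_def by (rule cc_hull_cone[OF rgen_carrier])
  show "seq_closed (Rsys n)" unfolding Rsys_def by (rule cc_hull_closed)
next
  fix n m :: nat and V z assume z: "z \<in> Rsys n"
  show "compress n m V z \<in> Rsys m"
  proof (rule cc_hull_map[OF compress_lin_cont rgen_carrier])
    show "cvx_cone (Rsys m)" unfolding Rsys_def by (rule cc_hull_cone[OF rgen_carrier])
    show "seq_closed (Rsys m)" unfolding Rsys_def by (rule cc_hull_closed)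
    show "z \<in> cc_hull 1 n {compress 1 n V one1 |V. True}" using z unfolding Rsys_def .
  next
    fix s assume "s \<in> {compress 1 n V one1 |V. True}"
    then obtain U where sU: "s = compress 1 n U one1" by blast
    show "compress n m V s \<in> Rsys m" unfolding sU compress_compose by (rule rgen_in)
  qed
next
  show "proper_cone 1 (Rsys 1)"
    unfolding proper_cone_def
  proof (intro conjI)
    show "Rsys 1 \<subseteq> carrier 1 1" unfolding Rsys_def by (rule cc_hull_carrier[OF rgen_carrier])
    show "cvx_cone (Rsys 1)" unfolding Rsys_def by (rule cc_hull_cone[OF rgen_carrier])
    show "seq_closed (Rsys 1)" unfolding Rsys_def by (rule cc_hull_closed)
    show "\<forall>z\<in>Rsys 1. zneg z \<in> Rsys 1 \<longrightarrow> z = zzero"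
    proof (intro ballI impI)
      fix z assume z: "z \<in> Rsys 1" and nz: "zneg z \<in> Rsys 1"
      have zp: "z \<in> psd 1" and nzp: "zneg z \<in> psd 1" using z nz Rsys_sub_psd by auto
      have zC: "z \<in> carrier 1 1" using zp by (simp add: psd_def)
      have "\<forall>v. 0 \<le> Re (\<Sum>i<1. \<Sum>j<1. cnj (v i) * z 0 i j * v j)" using zp unfolding psd_def by blast
      then have a: "0 \<le> Re (z 0 0 0)" by (rule allE[where x="\<lambda>_. 1"]) simp
      have "\<forall>v. 0 \<le> Re (\<Sum>i<1. \<Sum>j<1. cnj (v i) * zneg z 0 i j * v j)" using nzp unfolding psd_def by blast
      then have b: "Re (z 0 0 0) \<le> 0" by (rule allE[where x="\<lambda>_. 1"]) (simp add: zneg_def)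
      have "z 0 0 0 = 0" using a b carrier_real1[OF zC, of 0] by (metis antisym of_real_0)
      then show "z = zzero" by (intro carrier_eqI[OF zC zzero_carrier]) (auto simp: zzero_def)
    qed
    show "\<exists>z\<in>Rsys 1. \<exists>e>0. \<forall>w\<in>carrier 1 1. (\<Sum>k<1. cmod (w k 0 0 - z k 0 0)) < e \<longrightarrow> w \<in> Rsys 1"
    proof (intro bexI[of _ one1] exI[of _ 1] conjI ballI impI)
      have "compress 1 1 (\<lambda>_ _. 1) one1 = one1"
        by (intro ext) (simp add: compress_def one1_def)
      then show "one1 \<in> Rsys 1" using rgen_in[of 1 "\<lambda>_ _. 1"] by simp
      show "(0::real) < 1" by simp
      fix w assume wC: "w \<in> carrier 1 1" and cl: "(\<Sum>k<1. cmod (w k 0 0 - one1 k 0 0)) < 1"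
      have wr: "complex_of_real (Re (w 0 0 0)) = w 0 0 0" by (rule carrier_real1[OF wC])
      have "cmod (w 0 0 0 - 1) < 1" using cl by (simp add: one1_def)
      then have "\<bar>Re (w 0 0 0) - 1\<bar> < 1" using abs_Re_le_cmod[of "w 0 0 0 - 1"] by simp
      then have pos: "0 < Re (w 0 0 0)" by linarith
      define c where "c = complex_of_real (sqrt (Re (w 0 0 0)))"
      have "compress 1 1 (\<lambda>_ _. c) one1 = w"
      proof (rule carrier_eqI[OF compress_carrier[OF one1_carrier] wC])
        fix k i j :: nat assume "k < 1" "i < 1" "j < 1"
        then have "k = 0" "i = 0" "j = 0" by auto
        have cc: "cnj c * c = w 0 0 0"
        proof -
          have "cnj c * c = complex_of_real (sqrt (Re (w 0 0 0)) * sqrt (Re (w 0 0 0)))"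
            by (simp only: c_def complex_cnj_complex_of_real of_real_mult)
          also have "\<dots> = complex_of_real (Re (w 0 0 0))" using pos by simp
          finally show ?thesis using wr by simp
        qed
        show "compress 1 1 (\<lambda>_ _. c) one1 k i j = w k i j"
          using cc \<open>k = 0\<close> \<open>i = 0\<close> \<open>j = 0\<close> by (simp add: compress_def one1_def)
      qed
      then show "w \<in> Rsys 1" using rgen_in[of 1 "\<lambda>_ _. c"] by simp
    qed
  qed
qed

lemma Rsys_cp:
  assumes G: "aos d G" and g: "g \<in> G 1"
  shows "cp_map 1 Rsys d G (\<lambda>k _. Re (g k 0 0))"
  unfolding cp_map_def
proof (intro allI impI ballI)
  fix n :: nat and z assume n: "1 \<le> n" and z: "z \<in> Rsys n"
  have gC: "g \<in> carrier d 1" using aos_carrier[OF G, of 1] g by auto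
  show "lin_apply 1 d (\<lambda>k _. Re (g k 0 0)) z \<in> G n"
  proof (rule cc_hull_map[OF lin_apply_lin_cont rgen_carrier aos_cone[OF G n] aos_closed[OF G n]])
    show "z \<in> cc_hull 1 n {compress 1 n V one1 |V. True}" using z unfolding Rsys_def .
  next
    fix s assume "s \<in> {compress 1 n V one1 |V. True}"
    then obtain V where s: "s = compress 1 n V one1" by blast
    have "lin_apply 1 d (\<lambda>k _. Re (g k 0 0)) s = compress 1 n V g"
    proof (intro ext)
      fix k i j
      show "lin_apply 1 d (\<lambda>k _. Re (g k 0 0)) s k i j = compress 1 n V g k i j"
      proof (cases "k < d")
        case True then show ?thesis by (auto simp: s lin_apply_def compress_def one1_def carrier_real1[OF gC] mult_ac)
      next
        case False
        have "g k 0 0 = 0" using carrier_zero[OF gC, of k 0 0] False by simp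
        then show ?thesis using False by (simp add: s lin_apply_def compress_def)
      qed
    qed
    moreover have "compress 1 n V g \<in> G n" by (rule aos_compress[OF G _ n g]) simp
    ultimately show "lin_apply 1 d (\<lambda>k _. Re (g k 0 0)) s \<in> G n" by simp
  qed
qed


lemma ftp_aos: "functorial_tp T \<Longrightarrow> aos d G \<Longrightarrow> aos e H \<Longrightarrow> aos (d*e) (T d G e H)"
  unfolding functorial_tp_def by blast

lemma ftp_cp: "functorial_tp T \<Longrightarrow> aos d1 G1 \<Longrightarrow> aos d2 G2 \<Longrightarrow> aos e1 H1 \<Longrightarrow> aos e2 H2 \<Longrightarrow>
   cp_map d1 G1 d2 G2 M \<Longrightarrow> cp_map e1 H1 e2 H2 N \<Longrightarrow>
   cp_map (d1*e1) (T d1 G1 e1 H1) (d2*e2) (T d2 G2 e2 H2) (kron_lin e1 e2 M N)"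
  unfolding functorial_tp_def by blast

lemma eps_exists:
  assumes T: "functorial_tp T"
  shows "\<exists>\<epsilon>. (\<epsilon> = 1 \<or> \<epsilon> = -1) \<and> zscale \<epsilon> one1 \<in> T 1 Rsys 1 Rsys 1"
proof -
  let ?K = "T 1 Rsys 1 Rsys 1"
  have A: "aos 1 (T 1 Rsys 1 Rsys)" using ftp_aos[OF T Rsys_aos Rsys_aos] by simp
  have P: "proper_cone 1 ?K" by (rule aos_proper[OF A])
  obtain z0 e0 where z0: "z0 \<in> ?K" and e0: "e0 > 0"
    and ball: "\<And>u. u \<in> carrier 1 1 \<Longrightarrow> (\<Sum>k<1. cmod (u k 0 0 - z0 k 0 0)) < e0 \<Longrightarrow> u \<in> ?K"
    using P unfolding proper_cone_def by blast
  have KC: "?K \<subseteq> carrier 1 1" using P unfolding proper_cone_def by blast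
  have cone: "cvx_cone ?K" using P unfolding proper_cone_def by blast
  define c0 where "c0 = Re (z0 0 0 0)"
  define s :: real where "s = (if 0 \<le> c0 then 1 else -1)"
  define u where "u = zadd z0 (zscale (s * e0 / 2) one1)"
  have z0C: "z0 \<in> carrier 1 1" using z0 KC by blast
  have uC: "u \<in> carrier 1 1" unfolding u_def by (intro zadd_carrier zscale_carrier z0C one1_carrier)
  have "(\<Sum>k<1. cmod (u k 0 0 - z0 k 0 0)) = \<bar>s * e0 / 2\<bar>"
    by (simp add: u_def zadd_def zscale_def one1_def norm_mult abs_mult)
  also have "\<dots> = e0 / 2" using e0 by (simp add: s_def abs_mult)
  finally have uK: "u \<in> ?K" using ball[OF uC] e0 by simp
  define c where "c = Re (u 0 0 0)"
  have cval: "c = c0 + s * e0 / 2" by (simp add: c_def c0_def u_def zadd_def zscale_def one1_def)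
  have cnz: "c \<noteq> 0" using e0 unfolding cval s_def by (auto split: if_splits)
  have ueq: "u = zscale c one1"
  proof (rule carrier_eqI[OF uC zscale_carrier[OF one1_carrier]])
    fix k i j :: nat assume "k < 1" "i < 1" "j < 1"
    then show "u k i j = zscale c one1 k i j"
      using carrier_real1[OF uC, of 0] by (simp add: zscale_def one1_def c_def)
  qed
  have "zscale (1 / \<bar>c\<bar>) u \<in> ?K" using cone uK by (intro cone_scale) auto
  moreover have "zscale (1 / \<bar>c\<bar>) u = zscale (c / \<bar>c\<bar>) one1"
    by (simp add: ueq zscale_def)
  moreover have "c / \<bar>c\<bar> = 1 \<or> c / \<bar>c\<bar> = -1" using cnz by (cases "0 < c") auto
  ultimately show ?thesis by metis
qed

lemma key_eps:
  assumes T: "functorial_tp T" and eps: "zscale \<epsilon> one1 \<in> T 1 Rsys 1 Rsys 1"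
    and G: "aos dx G" and H: "aos dy H" and g: "g \<in> G 1" and h: "h \<in> H 1" and n: "1 \<le> n"
  shows "zscale \<epsilon> (compress 1 n V (tau dx dy 1 1 g h)) \<in> T dx G dy H n"
proof -
  have gC: "g \<in> carrier dx 1" using aos_carrier[OF G, of 1] g by auto
  have hC: "h \<in> carrier dy 1" using aos_carrier[OF H, of 1] h by auto
  let ?Mg = "\<lambda>k (_::nat). Re (g k 0 0)" and ?Mh = "\<lambda>k (_::nat). Re (h k 0 0)"
  have cp: "cp_map (1*1) (T 1 Rsys 1 Rsys) (dx*dy) (T dx G dy H) (kron_lin 1 dy ?Mg ?Mh)"
    by (rule ftp_cp[OF T Rsys_aos G Rsys_aos H Rsys_cp[OF G g] Rsys_cp[OF H h]])
  have A: "aos (1*1) (T 1 Rsys 1 Rsys)" by (rule ftp_aos[OF T Rsys_aos Rsys_aos])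
  have z': "compress 1 n V (zscale \<epsilon> one1) \<in> T 1 Rsys 1 Rsys n"
    by (rule aos_compress[OF A _ n eps]) simp
  have img: "lin_apply (1*1) (dx*dy) (kron_lin 1 dy ?Mg ?Mh) (compress 1 n V (zscale \<epsilon> one1)) \<in> T dx G dy H n"
    using cp z' n unfolding cp_map_def by blast
  have "lin_apply (1*1) (dx*dy) (kron_lin 1 dy ?Mg ?Mh) (compress 1 n V (zscale \<epsilon> one1))
      = zscale \<epsilon> (compress 1 n V (tau dx dy 1 1 g h))"
  proof (intro ext)
    fix c i j
    show "lin_apply (1*1) (dx*dy) (kron_lin 1 dy ?Mg ?Mh) (compress 1 n V (zscale \<epsilon> one1)) c i j
      = zscale \<epsilon> (compress 1 n V (tau dx dy 1 1 g h)) c i j"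
    proof (cases "c < dx*dy")
      case True
      then show ?thesis
        by (auto simp: lin_apply_def kron_lin_def compress_def zscale_def one1_def tau_def
            carrier_real1[OF gC] carrier_real1[OF hC] mult_ac)
    next
      case False
      then show ?thesis by (auto simp: lin_apply_def compress_def zscale_def tau_def)
    qed
  qed
  then show ?thesis using img by simp
qed


definition Yel :: "nat \<Rightarrow> nat \<Rightarrow> nat \<Rightarrow> elt \<Rightarrow> elt \<Rightarrow> elt \<Rightarrow> elt" where
  "Yel dx dy n l1 l2 w = (\<lambda>k i j. if k = 0 \<and> i < n \<and> j < n then
     (\<Sum>c<dx*dy. l1 (c div dy) 0 0 * l2 (c mod dy) 0 0 * w c i j) else 0)"

lemma trip_Y: "trip_eval dx dy n l1 l2 l3 w = pair 1 n (Yel dx dy n l1 l2 w) l3"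
proof -
  have "(\<Sum>k1<dx. \<Sum>k2<dy. \<Sum>i<n. \<Sum>j<n. l1 k1 0 0 * l2 k2 0 0 * l3 0 i j * w (k1 * dy + k2) i j)
     = (\<Sum>k1<dx. \<Sum>i<n. \<Sum>j<n. \<Sum>k2<dy. l1 k1 0 0 * l2 k2 0 0 * l3 0 i j * w (k1 * dy + k2) i j)"
    by (rule sum.cong[OF refl], rule sum_swap2)
  also have "\<dots> = (\<Sum>i<n. \<Sum>j<n. \<Sum>k1<dx. \<Sum>k2<dy. l1 k1 0 0 * l2 k2 0 0 * l3 0 i j * w (k1 * dy + k2) i j)"
    by (rule sum_swap2)
  also have "\<dots> = (\<Sum>i<n. \<Sum>j<n. Yel dx dy n l1 l2 w 0 i j * l3 0 i j)"
    by (intro sum.cong refl) (simp add: Yel_def sum_split sum_distrib_left sum_distrib_right mult_ac)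
  finally show ?thesis unfolding trip_eval_def pair1 by simp
qed

lemma Yel_carrier:
  assumes l1: "l1 \<in> carrier dx 1" and l2: "l2 \<in> carrier dy 1" and w: "w \<in> carrier (dx*dy) n"
  shows "Yel dx dy n l1 l2 w \<in> carrier 1 n"
proof (rule carrierI')
  fix k i j :: nat assume "\<not> (k < 1 \<and> i < n \<and> j < n)"
  then show "Yel dx dy n l1 l2 w k i j = 0" by (auto simp: Yel_def)
next
  fix k i j :: nat
  have r1: "cnj (l1 c 0 0) = l1 c 0 0" for c using carrier_herm[OF l1, of c 0 0] by simp
  have r2: "cnj (l2 c 0 0) = l2 c 0 0" for c using carrier_herm[OF l2, of c 0 0] by simp
  show "Yel dx dy n l1 l2 w k j i = cnj (Yel dx dy n l1 l2 w k i j)"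
    by (auto simp: Yel_def cnj_sum r1 r2 carrier_herm[OF w, symmetric])
qed

lemma Yel_quad:
  "Re (\<Sum>i<n. \<Sum>j<n. cnj (v i) * Yel dx dy n l1 l2 w 0 i j * v j)
   = pair (dx*dy) n (compress 1 n (\<lambda>_ j. v j) (tau dx dy 1 1 l1 l2)) w"
proof -
  have "(\<Sum>i<n. \<Sum>j<n. cnj (v i) * Yel dx dy n l1 l2 w 0 i j * v j)
     = (\<Sum>i<n. \<Sum>j<n. \<Sum>c<dx*dy. cnj (v i) * (l1 (c div dy) 0 0 * l2 (c mod dy) 0 0) * v j * w c i j)"
    by (intro sum.cong refl) (simp add: Yel_def sum_distrib_left sum_distrib_right mult_ac)
  also have "\<dots> = (\<Sum>c<dx*dy. \<Sum>i<n. \<Sum>j<n. cnj (v i) * (l1 (c div dy) 0 0 * l2 (c mod dy) 0 0) * v j * w c i j)"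
    by (rule sum_swap2[symmetric])
  finally show ?thesis
    by (simp add: pair_def compress_def tau_def)
qed

lemma wvalid:
  assumes T: "functorial_tp T" and G: "aos dx G" and H: "aos dy H" and n: "1 \<le> n"
    and w: "w \<in> dual_cone (dx*dy) n (T dx G dy H n)"
  shows "w \<in> pm (cmax3 dx (dual_sys dx G 1) dy (dual_sys dy H 1) n (psd n))"
proof -
  obtain \<epsilon> where eps: "\<epsilon> = 1 \<or> \<epsilon> = -1" "zscale \<epsilon> one1 \<in> T 1 Rsys 1 Rsys 1"
    using eps_exists[OF T] by blast
  have wC: "w \<in> carrier (dx*dy) n" using w dual_cone_carrier by blast
  have G1: "G 1 \<subseteq> carrier dx 1" "cvx_cone (G 1)" "seq_closed (G 1)"
    using aos_carrier[OF G] aos_cone[OF G] aos_closed[OF G] by auto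
  have H1: "H 1 \<subseteq> carrier dy 1" "cvx_cone (H 1)" "seq_closed (H 1)"
    using aos_carrier[OF H] aos_cone[OF H] aos_closed[OF H] by auto
  have main: "0 \<le> \<epsilon> * trip_eval dx dy n l1 l2 l3 w"
    if l1: "l1 \<in> dual_cone dx 1 (dual_sys dx G 1)" and l2: "l2 \<in> dual_cone dy 1 (dual_sys dy H 1)"
      and l3: "l3 \<in> dual_cone 1 n (psd n)" for l1 l2 l3
  proof -
    have l1C: "l1 \<in> carrier dx 1" using l1 dual_cone_carrier by blast
    have l2C: "l2 \<in> carrier dy 1" using l2 dual_cone_carrier by blast
    have l1G: "l1 \<in> G 1"
    proof (rule bipolar[OF G1 l1C])
      fix q assume "q \<in> dual_cone dx 1 (G 1)"
      then have "0 \<le> pair dx 1 q l1" using l1 by (simp add: dual_cone_def dual_sys_def)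
      then show "0 \<le> pair dx 1 l1 q" by (simp add: pair_sym)
    qed
    have l2H: "l2 \<in> H 1"
    proof (rule bipolar[OF H1 l2C])
      fix q assume "q \<in> dual_cone dy 1 (H 1)"
      then have "0 \<le> pair dy 1 q l2" using l2 by (simp add: dual_cone_def dual_sys_def)
      then show "0 \<le> pair dy 1 l2 q" by (simp add: pair_sym)
    qed
    let ?Y = "Yel dx dy n l1 l2 w"
    have YC: "?Y \<in> carrier 1 n" by (rule Yel_carrier[OF l1C l2C wC])
    have "zscale \<epsilon> ?Y \<in> psd n"
      unfolding psd_def
    proof (intro CollectI conjI allI zscale_carrier[OF YC])
      fix v :: "nat \<Rightarrow> complex"
      have mem: "zscale \<epsilon> (compress 1 n (\<lambda>_ j. v j) (tau dx dy 1 1 l1 l2)) \<in> T dx G dy H n"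
        by (rule key_eps[OF T eps(2) G H l1G l2H n])
      then have "0 \<le> pair (dx*dy) n (zscale \<epsilon> (compress 1 n (\<lambda>_ j. v j) (tau dx dy 1 1 l1 l2))) w"
        using w unfolding dual_cone_def by blast
      also have "\<dots> = \<epsilon> * pair (dx*dy) n (compress 1 n (\<lambda>_ j. v j) (tau dx dy 1 1 l1 l2)) w"
        by (rule pair_zscale_left)
      also have "\<dots> = \<epsilon> * Re (\<Sum>i<n. \<Sum>j<n. cnj (v i) * ?Y 0 i j * v j)"
        by (simp only: Yel_quad)
      also have "\<dots> = Re (\<Sum>i<n. \<Sum>j<n. cnj (v i) * zscale \<epsilon> ?Y 0 i j * v j)"
        by (simp add: zscale_def sum_distrib_left mult_ac Re_sum)
      finally show "0 \<le> Re (\<Sum>i<n. \<Sum>j<n. cnj (v i) * zscale \<epsilon> ?Y 0 i j * v j)" .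
    qed
    then have "0 \<le> pair 1 n (zscale \<epsilon> ?Y) l3" using l3 unfolding dual_cone_def by blast
    then show ?thesis by (simp add: pair_zscale_left trip_Y)
  qed
  have trip_scale: "trip_eval dx dy n l1 l2 l3 (zscale \<epsilon> w) = \<epsilon> * trip_eval dx dy n l1 l2 l3 w" for l1 l2 l3
    by (simp add: trip_eval_def zscale_def sum_distrib_left mult_ac Re_sum)
  have inC: "zscale \<epsilon> w \<in> cmax3 dx (dual_sys dx G 1) dy (dual_sys dy H 1) n (psd n)"
    unfolding cmax3_def using main zscale_carrier[OF wC] by (simp add: trip_scale)
  show ?thesis
  proof (cases "\<epsilon> = 1")
    case True
    have "zscale \<epsilon> w = w" using True by (simp add: zscale_def)
    then show ?thesis using inC by (simp add: pm_def)
  next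
    case False
    then have e: "\<epsilon> = -1" using eps(1) by simp
    have zn: "zscale \<epsilon> w = zneg w" using e by (simp add: zscale_def zneg_def)
    have "w = zneg (zneg w)" by (simp add: zneg_def)
    then show ?thesis using inC zn unfolding pm_def by (metis UnI2 image_eqI)
  qed
qed


lemma part1_fwd:
  assumes T: "functorial_tp T" and G: "aos dx G" and H: "aos dy H"
    and w: "w \<in> dual_cone (dx*dy) n (T dx G dy H n)" and n: "1 \<le> n"
    and G': "aos dx' G'" and H': "aos dy' H'" and n': "1 \<le> n'" and a: "a \<in> T dx' G' dy' H' n'"
  shows "xa_tensor dx dy n w dx' dy' n' a \<in> cmax3 (dx*dx') (min_tp dx (dual_sys dx G) dx' G' 1)
     (dy*dy') (min_tp dy (dual_sys dy H) dy' H' 1) (n*n') (psd (n*n'))"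
proof -
  have wC: "w \<in> carrier (dx*dy) n" using w dual_cone_carrier by blast
  have A': "aos (dx'*dy') (T dx' G' dy' H')" by (rule ftp_aos[OF T G' H'])
  have A: "aos (dx*dy) (T dx G dy H)" by (rule ftp_aos[OF T G H])
  have aC: "a \<in> carrier (dx'*dy') n'" using aos_carrier[OF A' n'] a by blast
  show ?thesis unfolding cmax3_def
  proof (intro CollectI conjI ballI xa_carrier[OF wC aC])
    fix l1 l2 l3
    assume l1: "l1 \<in> dual_cone (dx*dx') 1 (min_tp dx (dual_sys dx G) dx' G' 1)"
      and l2: "l2 \<in> dual_cone (dy*dy') 1 (min_tp dy (dual_sys dy H) dy' H' 1)"
      and l3: "l3 \<in> dual_cone 1 (n*n') (psd (n*n'))"
    have l1C: "l1 \<in> carrier (dx*dx') 1" using l1 dual_cone_carrier by blast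
    have l2C: "l2 \<in> carrier (dy*dy') 1" using l2 dual_cone_carrier by blast
    have cpG: "cp_map dx' G' dx G (lmat dx' l1)"
      unfolding cp_map_def
    proof (intro allI impI ballI)
      fix k g assume k: "1 \<le> k" and g: "g \<in> G' k"
      have gC: "g \<in> carrier dx' k" using aos_carrier[OF G' k] g by blast
      show "lin_apply dx' dx (lmat dx' l1) g \<in> G k"
      proof (rule bipolar[OF aos_carrier[OF G k] aos_cone[OF G k] aos_closed[OF G k] lin_apply_carrier[OF gC]])
        fix q assume q: "q \<in> dual_cone dx k (G k)"
        then have "q \<in> dual_sys dx G k" by (simp add: dual_sys_def)
        from el_dual[OF l1 k this g] show "0 \<le> pair dx k (lin_apply dx' dx (lmat dx' l1) g) q"
          by (simp add: pair_sym)
      qed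
    qed
    have cpH: "cp_map dy' H' dy H (lmat dy' l2)"
      unfolding cp_map_def
    proof (intro allI impI ballI)
      fix k h assume k: "1 \<le> k" and h: "h \<in> H' k"
      have hC: "h \<in> carrier dy' k" using aos_carrier[OF H' k] h by blast
      show "lin_apply dy' dy (lmat dy' l2) h \<in> H k"
      proof (rule bipolar[OF aos_carrier[OF H k] aos_cone[OF H k] aos_closed[OF H k] lin_apply_carrier[OF hC]])
        fix q assume q: "q \<in> dual_cone dy k (H k)"
        then have "q \<in> dual_sys dy H k" by (simp add: dual_sys_def)
        from el_dual[OF l2 k this h] show "0 \<le> pair dy k (lin_apply dy' dy (lmat dy' l2) h) q"
          by (simp add: pair_sym)
      qed
    qed
    have cp: "cp_map (dx'*dy') (T dx' G' dy' H') (dx*dy) (T dx G dy H) (kron_lin dy' dy (lmat dx' l1) (lmat dy' l2))"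
      by (rule ftp_cp[OF T G' G H' H cpG cpH])
    let ?b = "bmap dx' dy' dx dy l1 l2 a"
    have b: "?b \<in> T dx G dy H n'" using cp a n' unfolding cp_map_def bmap_def by blast
    have bC: "?b \<in> carrier (dx*dy) n'" using aos_carrier[OF A n'] b by blast
    have pos: "0 \<le> pair (dx*dy) n (compress n' n V ?b) w" for V
    proof -
      have "compress n' n V ?b \<in> T dx G dy H n" by (rule aos_compress[OF A n' n b])
      then show ?thesis using w unfolding dual_cone_def by blast
    qed
    have "qel dx dy n n' w ?b \<in> psd (n*n')" by (rule qel_psd[OF wC bC pos])
    then have "0 \<le> pair 1 (n*n') (qel dx dy n n' w ?b) l3" using l3 unfolding dual_cone_def by blast
    then show "0 \<le> trip_eval (dx*dx') (dy*dy') (n*n') l1 l2 l3 (xa_tensor dx dy n w dx' dy' n' a)"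
      by (simp only: trip_T[OF l1C l2C])
  qed
qed

lemma part1_bwd:
  assumes T: "functorial_tp T" and G: "aos dx G" and H: "aos dy H" and n: "1 \<le> n"
    and aC: "a \<in> carrier (dx*dy) n" and na: "a \<notin> T dx G dy H n"
  shows "\<exists>w\<in>dual_cone (dx*dy) n (T dx G dy H n). xa_tensor dx dy n w dx dy n a \<notin>
     cmax3 (dx*dx) (min_tp dx (dual_sys dx G) dx G 1) (dy*dy) (min_tp dy (dual_sys dy H) dy H 1) (n*n) (psd (n*n))"
proof -
  have A: "aos (dx*dy) (T dx G dy H)" by (rule ftp_aos[OF T G H])
  obtain w where w: "w \<in> dual_cone (dx*dy) n (T dx G dy H n)" and neg: "pair (dx*dy) n a w < 0"
    using bipolar_sep[OF aos_carrier[OF A n] aos_cone[OF A n] aos_closed[OF A n] aC na] by blast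
  show ?thesis
  proof (intro bexI[OF _ w] notI)
    assume "xa_tensor dx dy n w dx dy n a \<in>
     cmax3 (dx*dx) (min_tp dx (dual_sys dx G) dx G 1) (dy*dy) (min_tp dy (dual_sys dy H) dy H 1) (n*n) (psd (n*n))"
    then have "0 \<le> trip_eval (dx*dx) (dy*dy) (n*n) (idl dx) (idl dy) (idl3 n) (xa_tensor dx dy n w dx dy n a)"
      unfolding cmax3_def using idl_dual[OF G] idl_dual[OF H] idl3_dual by blast
    also have "trip_eval (dx*dx) (dy*dy) (n*n) (idl dx) (idl dy) (idl3 n) (xa_tensor dx dy n w dx dy n a)
        = pair 1 (n*n) (qel dx dy n n w (bmap dx dy dx dy (idl dx) (idl dy) a)) (idl3 n)"
      by (rule trip_T[OF idl_carrier idl_carrier])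
    also have "\<dots> = pair (dx*dy) n a w" by (simp only: bmap_idl[OF aC] fail_pair)
    finally show False using neg by simp
  qed
qed

theorem corollary4p3:
  fixes T :: "nat \<Rightarrow> osys \<Rightarrow> nat \<Rightarrow> osys \<Rightarrow> osys"
  assumes "functorial_tp T"
  shows "(\<exists>S :: (nat \<times> osys \<times> nat \<times> osys \<times> nat \<times> elt) set.
            (\<forall>(dv, D, dw, E, ni, x) \<in> S. aos dv D \<and> aos dw E \<and> 1 \<le> ni \<and>
                 x \<in> pm (cmax3 dv (D 1) dw (E 1) ni (psd ni)))
          \<and> (\<forall>dx G dy H n a. aos dx G \<longrightarrow> aos dy H \<longrightarrow> 1 \<le> n \<longrightarrow> a \<in> carrier (dx * dy) n \<longrightarrow>
               (a \<in> T dx G dy H n \<longleftrightarrow>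
                 (\<forall>(dv, D, dw, E, ni, x) \<in> S.
                    xa_tensor dv dw ni x dx dy n a \<in>
                      cmax3 (dv * dx) (min_tp dv D dx G 1) (dw * dy) (min_tp dw E dy H 1)
                            (ni * n) (psd (ni * n))))))
       \<and> (\<forall>dv D dw E ni x. aos dv D \<longrightarrow> aos dw E \<longrightarrow> 1 \<le> ni \<longrightarrow> x \<in> max_tp dv D dw E ni \<longrightarrow>
            (\<forall>dx G dy H n a. aos dx G \<longrightarrow> aos dy H \<longrightarrow> 1 \<le> n \<longrightarrow> a \<in> min_tp dx G dy H n \<longrightarrow>
               xa_tensor dv dw ni x dx dy n a \<in>
                 cmax3 (dv * dx) (min_tp dv D dx G 1) (dw * dy) (min_tp dw E dy H 1)
                       (ni * n) (psd (ni * n))))"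
proof -
  define S :: "(nat \<times> osys \<times> nat \<times> osys \<times> nat \<times> elt) set" where
    "S = {(dx, dual_sys dx G, dy, dual_sys dy H, n, w) | dx G dy H n w.
           aos dx G \<and> aos dy H \<and> 1 \<le> n \<and> w \<in> dual_cone (dx*dy) n (T dx G dy H n)}"
  have T: "functorial_tp T" by (rule assms)
  have c1: "\<forall>(dv, D, dw, E, ni, x) \<in> S. aos dv D \<and> aos dw E \<and> 1 \<le> ni \<and>
                 x \<in> pm (cmax3 dv (D 1) dw (E 1) ni (psd ni))"
  proof
    fix t assume "t \<in> S"
    then obtain dx G dy H n w where t: "t = (dx, dual_sys dx G, dy, dual_sys dy H, n, w)"
      and G: "aos dx G" and H: "aos dy H" and n: "1 \<le> n" and w: "w \<in> dual_cone (dx*dy) n (T dx G dy H n)"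
      unfolding S_def by blast
    show "case t of (dv, D, dw, E, ni, x) \<Rightarrow> aos dv D \<and> aos dw E \<and> 1 \<le> ni \<and>
                 x \<in> pm (cmax3 dv (D 1) dw (E 1) ni (psd ni))"
      using dual_aos[OF G] dual_aos[OF H] n wvalid[OF T G H n w] by (simp add: t)
  qed
  have c2: "\<forall>dx G dy H n a. aos dx G \<longrightarrow> aos dy H \<longrightarrow> 1 \<le> n \<longrightarrow> a \<in> carrier (dx * dy) n \<longrightarrow>
               (a \<in> T dx G dy H n \<longleftrightarrow>
                 (\<forall>(dv, D, dw, E, ni, x) \<in> S.
                    xa_tensor dv dw ni x dx dy n a \<in>
                      cmax3 (dv * dx) (min_tp dv D dx G 1) (dw * dy) (min_tp dw E dy H 1)
                            (ni * n) (psd (ni * n))))"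
  proof (intro allI impI iffI)
    fix dx' G' dy' H' n' a
    assume G': "aos dx' G'" and H': "aos dy' H'" and n': "1 \<le> n'" and aC: "a \<in> carrier (dx' * dy') n'"
    {
      assume a: "a \<in> T dx' G' dy' H' n'"
      show "\<forall>(dv, D, dw, E, ni, x) \<in> S. xa_tensor dv dw ni x dx' dy' n' a \<in>
                      cmax3 (dv * dx') (min_tp dv D dx' G' 1) (dw * dy') (min_tp dw E dy' H' 1)
                            (ni * n') (psd (ni * n'))"
      proof
        fix t assume "t \<in> S"
        then obtain dx G dy H n w where t: "t = (dx, dual_sys dx G, dy, dual_sys dy H, n, w)"
          and G: "aos dx G" and H: "aos dy H" and n: "1 \<le> n" and w: "w \<in> dual_cone (dx*dy) n (T dx G dy H n)"
          unfolding S_def by blast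
        show "case t of (dv, D, dw, E, ni, x) \<Rightarrow> xa_tensor dv dw ni x dx' dy' n' a \<in>
                      cmax3 (dv * dx') (min_tp dv D dx' G' 1) (dw * dy') (min_tp dw E dy' H' 1)
                            (ni * n') (psd (ni * n'))"
          using part1_fwd[OF T G H w n G' H' n' a] by (simp add: t)
      qed
    }
    {
      assume all: "\<forall>(dv, D, dw, E, ni, x) \<in> S. xa_tensor dv dw ni x dx' dy' n' a \<in>
                      cmax3 (dv * dx') (min_tp dv D dx' G' 1) (dw * dy') (min_tp dw E dy' H' 1)
                            (ni * n') (psd (ni * n'))"
      show "a \<in> T dx' G' dy' H' n'"
      proof (rule ccontr)
        assume na: "a \<notin> T dx' G' dy' H' n'"
        obtain w where w: "w \<in> dual_cone (dx'*dy') n' (T dx' G' dy' H' n')"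
          and nw: "xa_tensor dx' dy' n' w dx' dy' n' a \<notin> cmax3 (dx'*dx') (min_tp dx' (dual_sys dx' G') dx' G' 1)
             (dy'*dy') (min_tp dy' (dual_sys dy' H') dy' H' 1) (n'*n') (psd (n'*n'))"
          using part1_bwd[OF T G' H' n' aC na] by blast
        have "(dx', dual_sys dx' G', dy', dual_sys dy' H', n', w) \<in> S"
          unfolding S_def using G' H' n' w by blast
        then show False using all nw by fastforce
      qed
    }
  qed
  have c3: "\<forall>dv D dw E ni x. aos dv D \<longrightarrow> aos dw E \<longrightarrow> 1 \<le> ni \<longrightarrow> x \<in> max_tp dv D dw E ni \<longrightarrow>
            (\<forall>dx G dy H n a. aos dx G \<longrightarrow> aos dy H \<longrightarrow> 1 \<le> n \<longrightarrow> a \<in> min_tp dx G dy H n \<longrightarrow>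
               xa_tensor dv dw ni x dx dy n a \<in>
                 cmax3 (dv * dx) (min_tp dv D dx G 1) (dw * dy) (min_tp dw E dy H 1)
                       (ni * n) (psd (ni * n)))"
    using part2 by blast
  show ?thesis using c1 c2 c3 by blast
qed


end
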